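(* For $\theta\in(0,\pi)$ let $\rho^{Ry}_\theta=|\psi^{Ry}_\theta\rangle\langle\psi^{Ry}_\theta|$ and $\rho^{Rx}_\theta=|\psi^{Rx}_\theta\rangle\langle\psi^{Rx}_\theta|$ with $|\psi^{Ry}_\theta\rangle=\cos\tfrac\theta2|00\rangle+\sin\tfrac\theta2|11\rangle$ and $|\psi^{Rx}_\theta\rangle=\cos\tfrac\theta2|00\rangle-i\sin\tfrac\theta2|11\rangle$. Then for all $\theta\in(0,\pi)$ (with $n=2$): $$C(\rho^{Ry}_\theta)=|\sin\theta|+|\cos\theta|-1,\qquad C(\rho^{Rx}_\theta)=\tfrac12\bigl(|\sin\theta|+|\cos\theta|-1\bigr),$$ $$\Gamma(\rho^{Ry}_\theta)=\Gamma(\rho^{Rx}_\theta)=|\sin\theta|+|\cos\theta|,$$ and hence, whenever $C>0$, $\kappa(\rho^{Ry}_\theta)=1$ and $\kappa(\rho^{Rx}_\theta)=2$.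
   Context: Let $I,X,Y,Z$ be the Pauli matrices. For $(q,p)\in\mathbb{F}_2^2$ define the single-qubit phase-point operator $A_{(q,p)}=\tfrac12\bigl(I+(-1)^pX+(-1)^{q+p}Y+(-1)^qZ\bigr)$. For $n$ qubits and $\alpha=(\alpha_1,\dots,\alpha_n)\in(\mathbb{F}_2^2)^n$ set $A_\alpha=A_{\alpha_1}\otimes\cdots\otimes A_{\alpha_n}$. The discrete Wigner function of an $n$-qubit operator $\rho$ is $W_\rho(\alpha)=2^{-n}\mathrm{Tr}(\rho A_\alpha)$, regarded as a vector in $\mathbb{R}^{4^n}$. $\mathrm{Stab}_n$ denotes the set of pure $n$-qubit stabilizer states, i.e. density operators $|\psi\rangle\langle\psi|$ with $|\psi\rangle$ the unique common $+1$ eigenvector of an abelian subgroup of the $n$-qubit Pauli group of size $2^n$ (not containing $-I$). The free Wigner polytope is $\mathcal{W}_{\mathrm{free}}=\mathrm{conv}\{W_\sigma:\sigma\in\mathrm{Stab}_n\}$, and the Wigner distance is $C(\rho)=\min_{f\in\mathcal{W}_{\mathrm{free}}}\|W_\rho-f\|_1$. The stabilizer extent (for mixed states) is $\Gamma(\rho)=\min\{\sum_i|\alpha_i|:\rho=\sum_i\alpha_i\sigma_i,\ \alpha_i\in\mathbb{R},\ \sigma_i\in\mathrm{Stab}_n\}$ (finite sums). For $C(\rho)>0$ the tightness ratio is $\kappa(\rho)=(\Gamma(\rho)-1)/C(\rho)$. *)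

theory Defs
  imports Complex_Main "Jordan_Normal_Form.Matrix"
begin

section \<open>Qubit operators as complex matrices (computational basis, first qubit most significant)\<close>

definition kron :: "complex mat \<Rightarrow> complex mat \<Rightarrow> complex mat" where
  "kron A B = mat (dim_row A * dim_row B) (dim_col A * dim_col B)
     (\<lambda>(i,j). A $$ (i div dim_row B, j div dim_col B) * B $$ (i mod dim_row B, j mod dim_col B))"

fun tensor_list :: "complex mat list \<Rightarrow> complex mat" where
  "tensor_list [] = 1\<^sub>m 1"
| "tensor_list (A # As) = kron A (tensor_list As)"

text \<open>Single-qubit Paulis: 0 = I, 1 = X, 2 = Y, 3 = Z.\<close>
definition pauli :: "nat \<Rightarrow> complex mat" where
  "pauli k = (if k = 0 then mat_of_rows_list 2 [[1,0],[0,1]]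
     else if k = 1 then mat_of_rows_list 2 [[0,1],[1,0]]
     else if k = 2 then mat_of_rows_list 2 [[0,-\<i>],[\<i>,0]]
     else mat_of_rows_list 2 [[1,0],[0,-1]])"

definition pauli_group :: "nat \<Rightarrow> complex mat set" where
  "pauli_group n = {(\<i> ^ k) \<cdot>\<^sub>m tensor_list (map pauli ps) | k ps.
      k < 4 \<and> length ps = n \<and> set ps \<subseteq> {0..3}}"

definition outer :: "complex vec \<Rightarrow> complex mat" where
  "outer \<psi> = mat (dim_vec \<psi>) (dim_vec \<psi>) (\<lambda>(i,j). \<psi> $ i * cnj (\<psi> $ j))"

definition unit_vec_c :: "nat \<Rightarrow> complex vec \<Rightarrow> bool" where
  "unit_vec_c d \<psi> \<longleftrightarrow> \<psi> \<in> carrier_vec d \<and> (\<Sum>i<d. (cmod (\<psi> $ i))\<^sup>2) = 1"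

text \<open>A finite subset of the Pauli group containing I and closed under products is a subgroup.\<close>
definition Stab :: "nat \<Rightarrow> complex mat set" where
  "Stab n = {outer \<psi> | \<psi>. \<exists>S.
      S \<subseteq> pauli_group n \<and> 1\<^sub>m (2^n) \<in> S \<and> (\<forall>P\<in>S. \<forall>Q\<in>S. P * Q \<in> S)
      \<and> (\<forall>P\<in>S. \<forall>Q\<in>S. P * Q = Q * P) \<and> card S = 2^n \<and> - 1\<^sub>m (2^n) \<notin> S
      \<and> unit_vec_c (2^n) \<psi> \<and> (\<forall>P\<in>S. P *\<^sub>v \<psi> = \<psi>)
      \<and> (\<forall>v\<in>carrier_vec (2^n). (\<forall>P\<in>S. P *\<^sub>v v = v) \<longrightarrow> (\<exists>c. v = c \<cdot>\<^sub>v \<psi>))}"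

definition mtrace :: "complex mat \<Rightarrow> complex" where
  "mtrace A = (\<Sum>i<dim_row A. A $$ (i,i))"

definition sgnb :: "bool \<Rightarrow> complex" where
  "sgnb b = (if b then -1 else 1)"

text \<open>Phase point (q,p) in F_2^2, encoded as a pair of booleans (True = 1).\<close>
definition phase_point1 :: "bool \<times> bool \<Rightarrow> complex mat" where
  "phase_point1 qp = (case qp of (q,p) \<Rightarrow>
     (1/2 :: complex) \<cdot>\<^sub>m (pauli 0 + sgnb p \<cdot>\<^sub>m pauli 1 + (sgnb q * sgnb p) \<cdot>\<^sub>m pauli 2
                         + sgnb q \<cdot>\<^sub>m pauli 3))"

definition phase_point :: "(bool \<times> bool) list \<Rightarrow> complex mat" where
  "phase_point \<alpha> = tensor_list (map phase_point1 \<alpha>)"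

definition phase_space :: "nat \<Rightarrow> (bool \<times> bool) list set" where
  "phase_space n = {\<alpha>. length \<alpha> = n}"

definition wigner :: "nat \<Rightarrow> complex mat \<Rightarrow> (bool \<times> bool) list \<Rightarrow> real" where
  "wigner n \<rho> \<alpha> = Re (mtrace (\<rho> * phase_point \<alpha>)) / 2 ^ n"

definition wigner_free :: "nat \<Rightarrow> ((bool \<times> bool) list \<Rightarrow> real) set" where
  "wigner_free n = {f. \<exists>F c. finite F \<and> F \<subseteq> Stab n \<and> (\<forall>\<sigma>\<in>F. c \<sigma> \<ge> (0::real))
      \<and> sum c F = 1 \<and> f = (\<lambda>\<alpha>. \<Sum>\<sigma>\<in>F. c \<sigma> * wigner n \<sigma> \<alpha>)}"

definition l1_dist :: "nat \<Rightarrow> ((bool \<times> bool) list \<Rightarrow> real) \<Rightarrow> ((bool \<times> bool) list \<Rightarrow> real) \<Rightarrow> real" where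
  "l1_dist n f g = (\<Sum>\<alpha>\<in>phase_space n. \<bar>f \<alpha> - g \<alpha>\<bar>)"

definition wigner_distance :: "nat \<Rightarrow> complex mat \<Rightarrow> real" where
  "wigner_distance n \<rho> = Inf {l1_dist n (wigner n \<rho>) f | f. f \<in> wigner_free n}"

definition stab_extent :: "nat \<Rightarrow> complex mat \<Rightarrow> real" where
  "stab_extent n \<rho> = Inf {\<Sum>\<sigma>\<in>F. \<bar>a \<sigma>\<bar> | F a. finite F \<and> F \<subseteq> Stab n
      \<and> \<rho> \<in> carrier_mat (2^n) (2^n)
      \<and> (\<forall>i<2^n. \<forall>j<2^n. \<rho> $$ (i,j) = (\<Sum>\<sigma>\<in>F. complex_of_real (a \<sigma>) * \<sigma> $$ (i,j)))}"

definition tightness :: "nat \<Rightarrow> complex mat \<Rightarrow> real" where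
  "tightness n \<rho> = (stab_extent n \<rho> - 1) / wigner_distance n \<rho>"

section \<open>The states of the theorem (basis order |00>,|01>,|10>,|11>)\<close>

definition psi_Ry :: "real \<Rightarrow> complex vec" where
  "psi_Ry \<theta> = vec 4 (\<lambda>i. if i = 0 then complex_of_real (cos (\<theta>/2))
                          else if i = 3 then complex_of_real (sin (\<theta>/2)) else 0)"

definition psi_Rx :: "real \<Rightarrow> complex vec" where
  "psi_Rx \<theta> = vec 4 (\<lambda>i. if i = 0 then complex_of_real (cos (\<theta>/2))
                          else if i = 3 then - \<i> * complex_of_real (sin (\<theta>/2)) else 0)"

definition rho_Ry :: "real \<Rightarrow> complex mat" where "rho_Ry \<theta> = outer (psi_Ry \<theta>)"
definition rho_Rx :: "real \<Rightarrow> complex mat" where "rho_Rx \<theta> = outer (psi_Rx \<theta>)"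

end

theory Submission
  imports Defs
begin

lemma less2: "(i::nat) < 2 \<longleftrightarrow> i = 0 \<or> i = 1" by auto
lemma less4: "(i::nat) < 4 \<longleftrightarrow> i = 0 \<or> i = 1 \<or> i = 2 \<or> i = 3" by auto
lemma sum4: "(\<Sum>i<(4::nat). f i) = f 0 + f 1 + f 2 + (f 3 :: 'a::comm_monoid_add)"
  by (simp add: eval_nat_numeral)
lemma sum2: "(\<Sum>i<(2::nat). f i) = f 0 + (f 1 :: 'a::comm_monoid_add)"
  by (simp add: eval_nat_numeral)

definition pent :: "nat \<Rightarrow> nat \<Rightarrow> nat \<Rightarrow> complex" where
 "pent k i j = (if k=0 then (if i=j then 1 else 0) else if k=1 then (if i\<noteq>j then 1 else 0)
   else if k=2 then (if i=j then 0 else if i=0 then -\<i> else \<i>) else (if i\<noteq>j then 0 else if i=0 then 1 else -1))"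

lemma pauli_eq: "pauli k = mat 2 2 (\<lambda>(i,j). pent k i j)"
proof (rule eq_matI)
  fix i j assume "i < dim_row (mat 2 2 (\<lambda>(i,j). pent k i j))" "j < dim_col (mat 2 2 (\<lambda>(i,j). pent k i j))"
  then have "i < 2" "j < 2" by auto
  then show "pauli k $$ (i,j) = mat 2 2 (\<lambda>(i,j). pent k i j) $$ (i,j)"
    unfolding less2 pauli_def pent_def mat_of_rows_list_def by auto
qed (auto simp: pauli_def mat_of_rows_list_def)

lemma pauli_carrier: "pauli k \<in> carrier_mat 2 2"
  unfolding pauli_eq by simp

lemma kron_index: "i < dim_row A * dim_row B \<Longrightarrow> j < dim_col A * dim_col B \<Longrightarrow>
  kron A B $$ (i,j) = A $$ (i div dim_row B, j div dim_col B) * B $$ (i mod dim_row B, j mod dim_col B)"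
  by (simp add: kron_def)
lemma kron_dims[simp]: "dim_row (kron A B) = dim_row A * dim_row B" "dim_col (kron A B) = dim_col A * dim_col B"
  by (simp_all add: kron_def)

lemma kron_one: "kron B (1\<^sub>m 1) = B"
  by (rule eq_matI) (auto simp: kron_def)

lemma kron_one': "kron B (1\<^sub>m (Suc 0)) = B"
  using kron_one by simp

lemma mat_mult_explicit: "mat n m f * mat m p g = mat n p (\<lambda>(i,j). \<Sum>k<m. f (i,k) * g (k,j))"
  by (rule eq_matI) (auto simp: scalar_prod_def lessThan_atLeast0)

lemma kron_mat2: "kron (mat 2 2 f) (mat 2 2 g) = mat 4 4 (\<lambda>(i,j). f (i div 2, j div 2) * g (i mod 2, j mod 2))"
  by (rule eq_matI) (auto simp: kron_def less_mult_imp_div_less)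

definition T :: "nat \<Rightarrow> nat \<Rightarrow> complex mat" where "T a b = kron (pauli a) (pauli b)"

lemma T_eq: "T a b = mat 4 4 (\<lambda>(i,j). pent a (i div 2) (j div 2) * pent b (i mod 2) (j mod 2))"
  unfolding T_def pauli_eq kron_mat2 by simp

lemma T_carrier: "T a b \<in> carrier_mat 4 4"
  unfolding T_eq by simp

lemma tensor2: "tensor_list (map pauli [a,b]) = T a b"
  by (simp add: T_def kron_one')

lemma kron_mixed2: "kron (mat 2 2 f) (mat 2 2 g) * kron (mat 2 2 f') (mat 2 2 g') =
   kron (mat 2 2 f * mat 2 2 f') (mat 2 2 g * mat 2 2 g')"
  unfolding kron_mat2 mat_mult_explicit
  apply (rule arg_cong[where f="mat 4 4"])
  apply (rule ext)
  apply (clarsimp simp: sum4 sum2)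
  apply (simp add: algebra_simps)
  done

lemma T_mult: "T a b * T c d = kron (pauli a * pauli c) (pauli b * pauli d)"
  unfolding T_def pauli_eq by (rule kron_mixed2)

definition cs :: "nat \<Rightarrow> nat \<Rightarrow> complex" where
  "cs a c = (if a = 0 \<or> c = 0 \<or> a = c then 1 else -1)"

lemma pauli_comm: assumes "a < 4" "c < 4"
  shows "pauli a * pauli c = cs a c \<cdot>\<^sub>m (pauli c * pauli a)"
proof -
  have "mat 2 2 (\<lambda>(i, j). \<Sum>k<2. pent a i k * pent c k j) = cs a c \<cdot>\<^sub>m mat 2 2 (\<lambda>(i, j). \<Sum>k<2. pent c i k * pent a k j)"
  proof (rule eq_matI)
    fix i j assume "i < dim_row (cs a c \<cdot>\<^sub>m mat 2 2 (\<lambda>(i, j). \<Sum>k<2. pent c i k * pent a k j))"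
      "j < dim_col (cs a c \<cdot>\<^sub>m mat 2 2 (\<lambda>(i, j). \<Sum>k<2. pent c i k * pent a k j))"
    then have "i < 2" "j < 2" by auto
    then show "mat 2 2 (\<lambda>(i, j). \<Sum>k<2. pent a i k * pent c k j) $$ (i,j) = (cs a c \<cdot>\<^sub>m mat 2 2 (\<lambda>(i, j). \<Sum>k<2. pent c i k * pent a k j)) $$ (i,j)"
      using assms unfolding less2 less4 by (auto simp: sum2 pent_def cs_def)
  qed auto
  then show ?thesis unfolding pauli_eq mat_mult_explicit by simp
qed

lemma pauli_sq: assumes "a < 4" shows "pauli a * pauli a = 1\<^sub>m 2"
proof -
  have "mat 2 2 (\<lambda>(i, j). \<Sum>k<2. pent a i k * pent a k j) = 1\<^sub>m 2"
  proof (rule eq_matI)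
    fix i j assume "i < dim_row (1\<^sub>m 2 :: complex mat)" "j < dim_col (1\<^sub>m 2 :: complex mat)"
    then have "i < 2" "j < 2" by auto
    then show "mat 2 2 (\<lambda>(i, j). \<Sum>k<2. pent a i k * pent a k j) $$ (i,j) = (1\<^sub>m 2 :: complex mat) $$ (i,j)"
      using assms unfolding less2 less4 by (auto simp: sum2 pent_def)
  qed auto
  then show ?thesis unfolding pauli_eq mat_mult_explicit by simp
qed

lemma kron_smult: "kron (x \<cdot>\<^sub>m A) (y \<cdot>\<^sub>m B) = (x * y) \<cdot>\<^sub>m kron A B"
proof (rule eq_matI)
  fix i j assume a: "i < dim_row ((x * y) \<cdot>\<^sub>m kron A B)" "j < dim_col ((x * y) \<cdot>\<^sub>m kron A B)"
  then have "i div dim_row B < dim_row A" "j div dim_col B < dim_col A" 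
    "i mod dim_row B < dim_row B" "j mod dim_col B < dim_col B"
    by (auto simp: less_mult_imp_div_less intro!: mod_less_divisor Nat.gr0I)
  then show "kron (x \<cdot>\<^sub>m A) (y \<cdot>\<^sub>m B) $$ (i, j) = ((x * y) \<cdot>\<^sub>m kron A B) $$ (i, j)"
    using a by (simp add: kron_def)
qed (auto simp: kron_def)

lemma kron_id2: "kron (1\<^sub>m 2) (1\<^sub>m 2) = (1\<^sub>m 4 :: complex mat)"
  by (rule eq_matI) (auto simp: kron_def less4)

lemma T_comm: assumes "a < 4" "b < 4" "c < 4" "d < 4"
  shows "T a b * T c d = (cs a c * cs b d) \<cdot>\<^sub>m (T c d * T a b)"
  unfolding T_mult pauli_comm[OF assms(1,3)] pauli_comm[OF assms(2,4)] kron_smult ..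

lemma T_sq: assumes "a < 4" "b < 4" shows "T a b * T a b = 1\<^sub>m 4"
  unfolding T_mult pauli_sq[OF assms(1)] pauli_sq[OF assms(2)] kron_id2 ..

lemma pent_herm: "i < 2 \<Longrightarrow> j < 2 \<Longrightarrow> pent a j i = cnj (pent a i j)"
  unfolding less2 by (auto simp: pent_def)

definition herm :: "complex mat \<Rightarrow> bool" where
  "herm M \<longleftrightarrow> M \<in> carrier_mat 4 4 \<and> (\<forall>i<4. \<forall>j<4. M $$ (j,i) = cnj (M $$ (i,j)))"

lemma T_herm: "herm (T a b)"
  unfolding herm_def
proof (intro conjI allI impI)
  fix i j :: nat assume ij: "i < 4" "j < 4"
  then have d: "i div 2 < 2" "j div 2 < 2" "i mod 2 < 2" "j mod 2 < 2" by auto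
  have "T a b $$ (j,i) = pent a (j div 2) (i div 2) * pent b (j mod 2) (i mod 2)"
    using ij unfolding T_eq by simp
  also have "\<dots> = cnj (pent a (i div 2) (j div 2) * pent b (i mod 2) (j mod 2))"
    using d by (simp add: pent_herm[of "i div 2" "j div 2"] pent_herm[of "i mod 2" "j mod 2"])
  also have "\<dots> = cnj (T a b $$ (i,j))" using ij unfolding T_eq by simp
  finally show "T a b $$ (j,i) = cnj (T a b $$ (i,j))" .
qed (rule T_carrier)

lemma smult_m1: "(-1 :: complex) \<cdot>\<^sub>m A = - A"
  by (rule eq_matI) auto
lemma smult_1: "(1 :: complex) \<cdot>\<^sub>m A = A"
  by (rule eq_matI) auto

lemma smult_smult': "(a::complex) \<cdot>\<^sub>m (b \<cdot>\<^sub>m A) = (a * b) \<cdot>\<^sub>m A"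
  by (rule eq_matI) auto

lemma pg_elem: assumes "g \<in> pauli_group 2"
  obtains k a b where "k < 4" "a < 4" "b < 4" "g = (\<i> ^ k) \<cdot>\<^sub>m T a b"
proof -
  obtain k ps where k: "k < 4" "length ps = 2" "set ps \<subseteq> {0..3}" "g = (\<i> ^ k) \<cdot>\<^sub>m tensor_list (map pauli ps)"
    using assms unfolding pauli_group_def by blast
  then obtain a b where ps: "ps = [a,b]"
    by (metis (no_types, lifting) One_nat_def Suc_1 length_0_conv length_Suc_conv)
  then have "a < 4" "b < 4" using k(3) by auto
  then show ?thesis using that k(1,4) ps tensor2 by auto
qed

lemma pg_carrier: "g \<in> pauli_group 2 \<Longrightarrow> g \<in> carrier_mat 4 4"
  by (erule pg_elem) (simp add: T_carrier)

lemma cs_cases: "cs a c = 1 \<or> cs a c = -1" by (simp add: cs_def)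

lemma pg_commT: assumes "g \<in> pauli_group 2" "c < 4" "d < 4"
  shows "g * T c d = T c d * g \<or> g * T c d = - (T c d * g)"
proof -
  obtain k a b where kab: "k < 4" "a < 4" "b < 4" "g = (\<i> ^ k) \<cdot>\<^sub>m T a b"
    using pg_elem[OF assms(1)] by blast
  have "g * T c d = (\<i> ^ k) \<cdot>\<^sub>m (T a b * T c d)"
    using kab(4) by (simp add: mult_smult_assoc_mat[OF T_carrier T_carrier])
  also have "\<dots> = (\<i> ^ k) \<cdot>\<^sub>m ((cs a c * cs b d) \<cdot>\<^sub>m (T c d * T a b))"
    using T_comm[OF kab(2,3) assms(2,3)] by simp
  also have "\<dots> = (cs a c * cs b d) \<cdot>\<^sub>m (T c d * g)"
    using kab(4) by (simp add: mult_smult_distrib[OF T_carrier T_carrier] smult_smult' mult.commute)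
  finally have e: "g * T c d = (cs a c * cs b d) \<cdot>\<^sub>m (T c d * g)" .
  have "cs a c * cs b d = 1 \<or> cs a c * cs b d = -1"
    using cs_cases[of a c] cs_cases[of b d] by auto
  then show ?thesis using e smult_m1 smult_1 by metis
qed

lemma herm_smult: assumes "herm A" "cnj c = c" shows "herm (c \<cdot>\<^sub>m A)"
  unfolding herm_def
proof (intro conjI allI impI)
  have A: "A \<in> carrier_mat 4 4" "\<And>i j. i < 4 \<Longrightarrow> j < 4 \<Longrightarrow> A $$ (j,i) = cnj (A $$ (i,j))"
    using assms(1) unfolding herm_def by blast+
  show "c \<cdot>\<^sub>m A \<in> carrier_mat 4 4" using A(1) by (rule smult_carrier_mat)
  have d: "dim_row A = 4" "dim_col A = 4" using A(1) by auto
  fix i j :: nat assume ij: "i < 4" "j < 4"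
  then show "(c \<cdot>\<^sub>m A) $$ (j, i) = cnj ((c \<cdot>\<^sub>m A) $$ (i, j))"
    using A(2)[OF ij] ij assms(2) d by simp
qed

lemma pg_herm: assumes "g \<in> pauli_group 2" "g * g \<noteq> - 1\<^sub>m 4"
  shows "herm g"
proof -
  obtain k a b where kab: "k < 4" "a < 4" "b < 4" "g = (\<i> ^ k) \<cdot>\<^sub>m T a b"
    using pg_elem[OF assms(1)] by blast
  have "g * g = (\<i> ^ k * \<i> ^ k) \<cdot>\<^sub>m (T a b * T a b)"
    unfolding kab(4) mult_smult_assoc_mat[OF T_carrier smult_carrier_mat[OF T_carrier]]
       mult_smult_distrib[OF T_carrier T_carrier] smult_smult' ..
  also have "\<dots> = (\<i> ^ k * \<i> ^ k) \<cdot>\<^sub>m 1\<^sub>m 4" using T_sq[OF kab(2,3)] by simp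
  finally have gg: "g * g = (\<i> ^ k * \<i> ^ k) \<cdot>\<^sub>m 1\<^sub>m 4" .
  have "k = 0 \<or> k = 1 \<or> k = 2 \<or> k = 3" using kab(1) by auto
  then show ?thesis
  proof (elim disjE)
    assume "k = 1" then show ?thesis using gg assms(2) smult_m1 by simp
  next
    assume "k = 3" then show ?thesis using gg assms(2) smult_m1 by (simp add: power3_eq_cube)
  next
    assume "k = 0" then show ?thesis using kab(4) herm_smult[OF T_herm] by simp
  next
    assume "k = 2" then show ?thesis using kab(4) herm_smult[OF T_herm] by simp
  qed
qed

definition ip :: "complex vec \<Rightarrow> complex vec \<Rightarrow> complex" where
  "ip u v = (\<Sum>i<4. cnj (u $ i) * v $ i)"

lemma mv_index: assumes "M \<in> carrier_mat 4 4" "dim_vec v = 4" "i < 4"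
  shows "(M *\<^sub>v v) $ i = (\<Sum>j<4. M $$ (i,j) * v $ j)"
proof -
  have d: "dim_row M = 4" "dim_col M = 4" using assms(1) by auto
  show ?thesis using assms(2,3) d by (simp add: scalar_prod_def lessThan_atLeast0)
qed

lemma herm_ip: assumes "herm M" "dim_vec u = 4" "dim_vec v = 4"
  shows "ip u (M *\<^sub>v v) = ip (M *\<^sub>v u) v"
proof -
  have M: "M \<in> carrier_mat 4 4" "\<And>i j. i < 4 \<Longrightarrow> j < 4 \<Longrightarrow> M $$ (j,i) = cnj (M $$ (i,j))"
    using assms(1) unfolding herm_def by blast+
  have "ip u (M *\<^sub>v v) = (\<Sum>i<4. \<Sum>j<4. cnj (u $ i) * M $$ (i,j) * v $ j)"
  proof -
    have "ip u (M *\<^sub>v v) = (\<Sum>i<4. cnj (u $ i) * (\<Sum>j<4. M $$ (i,j) * v $ j))"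
      unfolding ip_def by (rule sum.cong[OF refl]) (simp add: mv_index[OF M(1) assms(3)])
    then show ?thesis by (simp add: sum_distrib_left mult.assoc)
  qed
  also have "\<dots> = (\<Sum>j<4. \<Sum>i<4. cnj (u $ i) * M $$ (i,j) * v $ j)"
    by (fact sum.swap)
  also have "\<dots> = (\<Sum>j<4. cnj (\<Sum>i<4. M $$ (j,i) * u $ i) * v $ j)"
  proof (rule sum.cong[OF refl])
    fix j assume j: "j \<in> {..<(4::nat)}"
    have "\<And>i. i \<in> {..<4} \<Longrightarrow> cnj (u $ i) * M $$ (i,j) * v $ j = cnj (M $$ (j,i) * u $ i) * v $ j"
    proof -
      fix i assume i: "i \<in> {..<(4::nat)}"
      have "M $$ (j,i) = cnj (M $$ (i,j))" using M(2)[of i j] i j by simp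
      then show "cnj (u $ i) * M $$ (i,j) * v $ j = cnj (M $$ (j,i) * u $ i) * v $ j" by simp
    qed
    then have "(\<Sum>i<4. cnj (u $ i) * M $$ (i,j) * v $ j) = (\<Sum>i<4. cnj (M $$ (j,i) * u $ i) * v $ j)"
      by (rule sum.cong[OF refl])
    also have "\<dots> = cnj (\<Sum>i<4. M $$ (j,i) * u $ i) * v $ j"
      by (simp add: sum_distrib_right)
    finally show "(\<Sum>i<4. cnj (u $ i) * M $$ (i,j) * v $ j) = cnj (\<Sum>i<4. M $$ (j,i) * u $ i) * v $ j" .
  qed
  also have "\<dots> = ip (M *\<^sub>v u) v"
    unfolding ip_def by (rule sum.cong[OF refl]) (simp add: mv_index[OF M(1) assms(2)])
  finally show ?thesis .
qed

lemma ip_smult_right: "dim_vec v = 4 \<Longrightarrow> ip u (k \<cdot>\<^sub>v v) = k * ip u v"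
  unfolding ip_def by (simp add: sum_distrib_left mult_ac)
lemma ip_smult_left: "dim_vec u = 4 \<Longrightarrow> ip (k \<cdot>\<^sub>v u) v = cnj k * ip u v"
  unfolding ip_def by (simp add: sum_distrib_left mult_ac)
lemma ip_uminus_right: "dim_vec v = 4 \<Longrightarrow> ip u (- v) = - ip u v"
  unfolding ip_def by (simp add: sum_negf)

definition stabctx :: "complex mat set \<Rightarrow> complex vec \<Rightarrow> bool" where
  "stabctx S \<psi> \<longleftrightarrow> S \<subseteq> pauli_group 2 \<and> - 1\<^sub>m 4 \<notin> S \<and> (\<forall>P\<in>S. \<forall>Q\<in>S. P * Q \<in> S)
     \<and> (\<forall>g\<in>S. g *\<^sub>v \<psi> = \<psi>) \<and> (\<forall>v\<in>carrier_vec 4. (\<forall>g\<in>S. g *\<^sub>v v = v) \<longrightarrow> (\<exists>c. v = c \<cdot>\<^sub>v \<psi>))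
     \<and> \<psi> \<in> carrier_vec 4 \<and> ip \<psi> \<psi> = 1"

definition goodP :: "complex mat \<Rightarrow> bool" where
  "goodP P \<longleftrightarrow> herm P \<and> P * P = 1\<^sub>m 4 \<and> (\<forall>g\<in>pauli_group 2. g * P = P * g \<or> g * P = - (P * g))"

lemma goodP_T: "a < 4 \<Longrightarrow> b < 4 \<Longrightarrow> goodP (T a b)"
  unfolding goodP_def using T_herm T_sq pg_commT by blast

lemma stab_dich: assumes st: "stabctx S \<psi>" and P: "goodP P"
  shows "(P *\<^sub>v \<psi> = \<psi> \<or> P *\<^sub>v \<psi> = - \<psi>) \<or> ip \<psi> (P *\<^sub>v \<psi>) = 0"
proof -
  have S: "S \<subseteq> pauli_group 2" "- 1\<^sub>m 4 \<notin> S" "\<And>P Q. P\<in>S \<Longrightarrow> Q\<in>S \<Longrightarrow> P * Q \<in> S"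
     "\<And>g. g\<in>S \<Longrightarrow> g *\<^sub>v \<psi> = \<psi>" "\<And>v. v\<in>carrier_vec 4 \<Longrightarrow> (\<forall>g\<in>S. g *\<^sub>v v = v) \<Longrightarrow> (\<exists>c. v = c \<cdot>\<^sub>v \<psi>)"
     "\<psi> \<in> carrier_vec 4" "ip \<psi> \<psi> = 1"
    using st unfolding stabctx_def by blast+
  have Pc: "herm P" "P * P = 1\<^sub>m 4" "\<And>g. g\<in>pauli_group 2 \<Longrightarrow> g * P = P * g \<or> g * P = - (P * g)"
    using P unfolding goodP_def by blast+
  have PC: "P \<in> carrier_mat 4 4" using Pc(1) unfolding herm_def by blast
  have gC: "g \<in> carrier_mat 4 4" if "g \<in> S" for g using pg_carrier S(1) that by blast
  have dpsi: "dim_vec \<psi> = 4" using S(6) by auto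
  show ?thesis
  proof (cases "\<forall>g\<in>S. g * P = P * g")
    case True
    define v where "v = P *\<^sub>v \<psi>"
    have vC: "v \<in> carrier_vec 4" unfolding v_def using PC S(6) by (rule mult_mat_vec_carrier)
    have "\<forall>g\<in>S. g *\<^sub>v v = v"
    proof
      fix g assume g: "g \<in> S"
      have "g *\<^sub>v v = (g * P) *\<^sub>v \<psi>" unfolding v_def using assoc_mult_mat_vec[OF gC[OF g] PC S(6)] by simp
      also have "\<dots> = (P * g) *\<^sub>v \<psi>" using True g by simp
      also have "\<dots> = P *\<^sub>v (g *\<^sub>v \<psi>)" using assoc_mult_mat_vec[OF PC gC[OF g] S(6)] by simp
      also have "\<dots> = v" using S(4)[OF g] v_def by simp
      finally show "g *\<^sub>v v = v" .
    qed
    then obtain c where c: "v = c \<cdot>\<^sub>v \<psi>" using S(5)[OF vC] by blast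
    have "\<psi> = (P * P) *\<^sub>v \<psi>" using Pc(2) S(6) by simp
    also have "\<dots> = P *\<^sub>v (c \<cdot>\<^sub>v \<psi>)" using assoc_mult_mat_vec[OF PC PC S(6)] c v_def by simp
    also have "\<dots> = c \<cdot>\<^sub>v (c \<cdot>\<^sub>v \<psi>)" using mult_mat_vec[OF PC S(6)] c v_def by simp
    finally have e: "\<psi> = c \<cdot>\<^sub>v (c \<cdot>\<^sub>v \<psi>)" .
    have "1 = ip \<psi> (c \<cdot>\<^sub>v (c \<cdot>\<^sub>v \<psi>))" using e S(7) by simp
    also have "\<dots> = c * c" using ip_smult_right dpsi S(7) by simp
    finally have "c * c = 1" by simp
    then have "c = 1 \<or> c = -1"
      by (metis add.inverse_inverse mult_minus_left square_eq_1_iff)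
    then have "P *\<^sub>v \<psi> = \<psi> \<or> P *\<^sub>v \<psi> = - \<psi>"
    proof
      assume "c = 1" then show ?thesis using c v_def by simp
    next
      assume "c = -1" then have "P *\<^sub>v \<psi> = (-1) \<cdot>\<^sub>v \<psi>" using c v_def by simp
      also have "\<dots> = - \<psi>" by (rule eq_vecI) auto
      finally show ?thesis by simp
    qed
    then show ?thesis by simp
  next
    case False
    then obtain g where g: "g \<in> S" "g * P \<noteq> P * g" by blast
    have gP: "g * P = - (P * g)" using Pc(3)[of g] g S(1) by blast
    have gg: "g * g \<noteq> - 1\<^sub>m 4" using S(2) S(3)[OF g(1) g(1)] by metis
    have gh: "herm g" using pg_herm[OF _ gg] g(1) S(1) by blast
    have dPpsi: "dim_vec (P *\<^sub>v \<psi>) = 4" using PC by simp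
    have "ip \<psi> (P *\<^sub>v \<psi>) = ip (g *\<^sub>v \<psi>) (P *\<^sub>v \<psi>)" using S(4)[OF g(1)] by simp
    also have "\<dots> = ip \<psi> (g *\<^sub>v (P *\<^sub>v \<psi>))" using herm_ip[OF gh dpsi dPpsi] by simp
    also have "\<dots> = ip \<psi> ((g * P) *\<^sub>v \<psi>)" using assoc_mult_mat_vec[OF gC[OF g(1)] PC S(6)] by simp
    also have "\<dots> = ip \<psi> (- ((P * g) *\<^sub>v \<psi>))" unfolding gP
      using uminus_mult_mat_vec[of \<psi> "P * g"] dpsi PC gC[OF g(1)] by simp
    also have "\<dots> = - ip \<psi> ((P * g) *\<^sub>v \<psi>)"
      using ip_uminus_right PC by simp
    also have "\<dots> = - ip \<psi> (P *\<^sub>v \<psi>)"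
      using assoc_mult_mat_vec[OF PC gC[OF g(1)] S(6)] S(4)[OF g(1)] by simp
    finally show ?thesis by simp
  qed
qed

definition ex :: "complex mat \<Rightarrow> complex vec \<Rightarrow> real" where
  "ex P \<psi> = Re (ip \<psi> (P *\<^sub>v \<psi>))"

lemma stabctxD: assumes "stabctx S \<psi>" shows "\<psi> \<in> carrier_vec 4" "ip \<psi> \<psi> = 1"
  using assms unfolding stabctx_def by blast+

lemma goodP_carrier: "goodP P \<Longrightarrow> P \<in> carrier_mat 4 4"
  unfolding goodP_def herm_def by blast

lemma stab_eig: assumes st: "stabctx S \<psi>" and P: "goodP P" and nz: "ex P \<psi> \<noteq> 0"
  obtains c where "P *\<^sub>v \<psi> = c \<cdot>\<^sub>v \<psi>" "c = 1 \<or> c = -1"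
proof -
  have psi: "\<psi> \<in> carrier_vec 4" using stabctxD[OF st] by blast
  have "P *\<^sub>v \<psi> = \<psi> \<or> P *\<^sub>v \<psi> = - \<psi>" using stab_dich[OF st P] nz unfolding ex_def by auto
  moreover have "\<psi> = 1 \<cdot>\<^sub>v \<psi>" by (rule eq_vecI) auto
  moreover have "- \<psi> = (-1) \<cdot>\<^sub>v \<psi>" by (rule eq_vecI) auto
  ultimately show ?thesis using that by metis
qed

lemma stab_vals: assumes st: "stabctx S \<psi>" and P: "goodP P"
  shows "ex P \<psi> = 1 \<or> ex P \<psi> = -1 \<or> ex P \<psi> = 0"
proof (cases "ex P \<psi> = 0")
  case False
  then obtain c where c: "P *\<^sub>v \<psi> = c \<cdot>\<^sub>v \<psi>" "c = 1 \<or> c = -1" using stab_eig[OF st P] by blast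
  have psi: "\<psi> \<in> carrier_vec 4" "ip \<psi> \<psi> = 1" using stabctxD[OF st] by blast+
  have "ex P \<psi> = Re c" unfolding ex_def c(1) using ip_smult_right[of \<psi> \<psi> c] psi by auto
  then show ?thesis using c(2) by auto
qed simp

lemma stab_anti: assumes st: "stabctx S \<psi>" and P: "goodP P" and Q: "Q \<in> carrier_mat 4 4"
  and anti: "Q * P = - (P * Q)" and nz: "ex P \<psi> \<noteq> 0"
  shows "ex Q \<psi> = 0"
proof -
  obtain c where c: "P *\<^sub>v \<psi> = c \<cdot>\<^sub>v \<psi>" "c = 1 \<or> c = -1" using stab_eig[OF st P nz] by blast
  have psi: "\<psi> \<in> carrier_vec 4" "ip \<psi> \<psi> = 1" using stabctxD[OF st] by blast+
  have dpsi: "dim_vec \<psi> = 4" using psi by auto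
  have PC: "P \<in> carrier_mat 4 4" using goodP_carrier[OF P] .
  have Ph: "herm P" using P unfolding goodP_def by blast
  define x where "x = ip \<psi> (Q *\<^sub>v \<psi>)"
  have dQ: "dim_vec (Q *\<^sub>v \<psi>) = 4" using Q by auto
  have "c * x = ip \<psi> (Q *\<^sub>v (P *\<^sub>v \<psi>))"
    unfolding x_def c(1) mult_mat_vec[OF Q psi(1)] using ip_smult_right[OF dQ] by simp
  also have "\<dots> = ip \<psi> ((Q * P) *\<^sub>v \<psi>)" using assoc_mult_mat_vec[OF Q PC psi(1)] by simp
  also have "\<dots> = ip \<psi> (- (P *\<^sub>v (Q *\<^sub>v \<psi>)))"
    unfolding anti using uminus_mult_mat_vec[of \<psi> "P * Q"] dpsi PC Q assoc_mult_mat_vec[OF PC Q psi(1)] by simp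
  also have "\<dots> = - ip \<psi> (P *\<^sub>v (Q *\<^sub>v \<psi>))" using ip_uminus_right PC by simp
  also have "\<dots> = - ip (P *\<^sub>v \<psi>) (Q *\<^sub>v \<psi>)" using herm_ip[OF Ph dpsi dQ] by simp
  also have "\<dots> = - (cnj c * x)" unfolding c(1) x_def using ip_smult_left dpsi by simp
  finally have "c * x = - (cnj c * x)" .
  then have "x = 0" using c(2) by auto
  then show ?thesis unfolding ex_def x_def by simp
qed

lemma T_anti: assumes "a < 4" "b < 4" "c < 4" "d < 4" "cs c a * cs d b = -1"
  shows "T c d * T a b = - (T a b * T c d)"
  using T_comm[OF assms(3,4,1,2)] assms(5) smult_m1 by simp

lemma pair_bound: assumes st: "stabctx S \<psi>" and P: "goodP P" and Q: "goodP Q"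
  and anti: "Q * P = - (P * Q)" and ab: "\<bar>a\<bar> = 1" "\<bar>b\<bar> = 1"
  shows "\<bar>a * ex P \<psi> + b * ex Q \<psi>\<bar> \<le> 1"
proof -
  have vP: "ex P \<psi> = 1 \<or> ex P \<psi> = -1 \<or> ex P \<psi> = 0" by (rule stab_vals[OF st P])
  have vQ: "ex Q \<psi> = 1 \<or> ex Q \<psi> = -1 \<or> ex Q \<psi> = 0" by (rule stab_vals[OF st Q])
  have "ex P \<psi> \<noteq> 0 \<Longrightarrow> ex Q \<psi> = 0" using stab_anti[OF st P goodP_carrier[OF Q] anti] by blast
  then show ?thesis using vP vQ ab by (auto simp: abs_mult)
qed

lemma quad_bound: assumes st: "stabctx S \<psi>" and P1: "goodP P1" and P2: "goodP P2"
  and Q1: "goodP Q1" and Q2: "goodP Q2"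
  and a11: "Q1 * P1 = - (P1 * Q1)" and a12: "Q2 * P1 = - (P1 * Q2)"
  and a21: "Q1 * P2 = - (P2 * Q1)" and a22: "Q2 * P2 = - (P2 * Q2)"
  and ab: "\<bar>a1\<bar> = 1" "\<bar>a2\<bar> = 1" "\<bar>b1\<bar> = 1" "\<bar>b2\<bar> = 1"
  shows "a1 * ex P1 \<psi> + a2 * ex P2 \<psi> + b1 * ex Q1 \<psi> + b2 * ex Q2 \<psi> \<le> 2"
proof -
  have v: "\<bar>ex P1 \<psi>\<bar> \<le> 1" "\<bar>ex P2 \<psi>\<bar> \<le> 1" "\<bar>ex Q1 \<psi>\<bar> \<le> 1" "\<bar>ex Q2 \<psi>\<bar> \<le> 1"
    using stab_vals[OF st P1] stab_vals[OF st P2] stab_vals[OF st Q1] stab_vals[OF st Q2] by auto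
  have m: "\<bar>a1 * ex P1 \<psi>\<bar> \<le> 1" "\<bar>a2 * ex P2 \<psi>\<bar> \<le> 1" "\<bar>b1 * ex Q1 \<psi>\<bar> \<le> 1" "\<bar>b2 * ex Q2 \<psi>\<bar> \<le> 1"
    using v ab by (simp_all add: abs_mult)
  show ?thesis
  proof (cases "ex P1 \<psi> \<noteq> 0 \<or> ex P2 \<psi> \<noteq> 0")
    case True
    then have "ex Q1 \<psi> = 0 \<and> ex Q2 \<psi> = 0"
      using stab_anti[OF st P1 goodP_carrier[OF Q1] a11] stab_anti[OF st P1 goodP_carrier[OF Q2] a12]
        stab_anti[OF st P2 goodP_carrier[OF Q1] a21] stab_anti[OF st P2 goodP_carrier[OF Q2] a22] by blast
    then show ?thesis using m by auto
  next
    case False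
    then show ?thesis using m by auto
  qed
qed

lemma Stab_ctx: assumes "\<sigma> \<in> Stab 2" obtains \<psi> S where "\<sigma> = outer \<psi>" "stabctx S \<psi>"
proof -
  obtain \<psi> S where A: "\<sigma> = outer \<psi>" "S \<subseteq> pauli_group 2" "1\<^sub>m 4 \<in> S" "\<forall>P\<in>S. \<forall>Q\<in>S. P * Q \<in> S"
      "- 1\<^sub>m 4 \<notin> S" "unit_vec_c 4 \<psi>" "\<forall>P\<in>S. P *\<^sub>v \<psi> = \<psi>"
      "\<forall>v\<in>carrier_vec 4. (\<forall>P\<in>S. P *\<^sub>v v = v) \<longrightarrow> (\<exists>c. v = c \<cdot>\<^sub>v \<psi>)"
    using assms unfolding Stab_def by auto
  have psi: "\<psi> \<in> carrier_vec 4" "(\<Sum>i<4. (cmod (\<psi> $ i))\<^sup>2) = 1" using A(6) unfolding unit_vec_c_def by auto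
  have "ip \<psi> \<psi> = (\<Sum>i<4. complex_of_real ((cmod (\<psi> $ i))\<^sup>2))"
    unfolding ip_def by (rule sum.cong[OF refl]) (subst complex_norm_square, rule mult.commute)
  also have "\<dots> = 1" using psi(2) by (metis of_real_1 of_real_sum)
  finally have "ip \<psi> \<psi> = 1" .
  then have "stabctx S \<psi>" unfolding stabctx_def using A psi(1) by blast
  then show ?thesis using that A(1) by blast
qed

lemma sum_swap4: "(\<Sum>i\<in>A. \<Sum>k\<in>B. \<Sum>a\<in>C. \<Sum>b\<in>D. f i k a b) = (\<Sum>a\<in>C. \<Sum>b\<in>D. \<Sum>i\<in>A. \<Sum>k\<in>B. (f i k a b :: 'z::comm_monoid_add))"
proof -
  have "(\<Sum>i\<in>A. \<Sum>k\<in>B. \<Sum>a\<in>C. \<Sum>b\<in>D. f i k a b) = (\<Sum>i\<in>A. \<Sum>a\<in>C. \<Sum>k\<in>B. \<Sum>b\<in>D. f i k a b)"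
    by (rule sum.cong[OF refl], rule sum.swap)
  also have "\<dots> = (\<Sum>i\<in>A. \<Sum>a\<in>C. \<Sum>b\<in>D. \<Sum>k\<in>B. f i k a b)"
    by (rule sum.cong[OF refl], rule sum.cong[OF refl], rule sum.swap)
  also have "\<dots> = (\<Sum>a\<in>C. \<Sum>i\<in>A. \<Sum>b\<in>D. \<Sum>k\<in>B. f i k a b)"
    by (rule sum.swap)
  also have "\<dots> = (\<Sum>a\<in>C. \<Sum>b\<in>D. \<Sum>i\<in>A. \<Sum>k\<in>B. f i k a b)"
    by (rule sum.cong[OF refl], rule sum.swap)
  finally show ?thesis .
qed

definition Ef :: "complex mat \<Rightarrow> complex mat \<Rightarrow> real" where
  "Ef P M = Re (\<Sum>i<4. \<Sum>j<4. M $$ (i,j) * P $$ (j,i))"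

lemma Ef_outer: assumes "dim_vec \<psi> = 4" "P \<in> carrier_mat 4 4"
  shows "Ef P (outer \<psi>) = Re (ip \<psi> (P *\<^sub>v \<psi>))"
proof -
  have "(\<Sum>i<4. \<Sum>j<4. outer \<psi> $$ (i,j) * P $$ (j,i)) = (\<Sum>i<4. \<Sum>j<4. cnj (\<psi> $ j) * (P $$ (j,i) * \<psi> $ i))"
    using assms(1) by (intro sum.cong refl) (simp add: outer_def)
  also have "\<dots> = (\<Sum>j<4. \<Sum>i<4. cnj (\<psi> $ j) * (P $$ (j,i) * \<psi> $ i))" by (rule sum.swap)
  also have "\<dots> = (\<Sum>j<4. cnj (\<psi> $ j) * (\<Sum>i<4. P $$ (j,i) * \<psi> $ i))" by (simp add: sum_distrib_left)
  also have "\<dots> = ip \<psi> (P *\<^sub>v \<psi>)" unfolding ip_def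
    by (rule sum.cong[OF refl]) (simp add: mv_index[OF assms(2,1)])
  finally show ?thesis unfolding Ef_def by simp
qed

definition sb :: "bool \<Rightarrow> real" where "sb b = (if b then -1 else 1)"
definition sg :: "nat \<Rightarrow> bool \<Rightarrow> bool \<Rightarrow> real" where
  "sg a q p = (if a = 0 then 1 else if a = 1 then sb p else if a = 2 then sb q * sb p else sb q)"

definition Tf :: "nat \<Rightarrow> nat \<Rightarrow> nat \<times> nat \<Rightarrow> complex" where
  "Tf a b = (\<lambda>(i,j). pent a (i div 2) (j div 2) * pent b (i mod 2) (j mod 2))"

lemma T_Tf: "T a b = mat 4 4 (Tf a b)"
  unfolding T_eq Tf_def ..

lemma pp1_eq: "phase_point1 (q,p) = mat 2 2 (\<lambda>(i,j). (1/2) * (\<Sum>a<4. complex_of_real (sg a q p) * pent a i j))"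
proof (rule eq_matI)
  fix i j assume "i < dim_row (mat 2 2 (\<lambda>(i,j). (1/2) * (\<Sum>a<4. complex_of_real (sg a q p) * pent a i j)))"
     "j < dim_col (mat 2 2 (\<lambda>(i,j). (1/2) * (\<Sum>a<4. complex_of_real (sg a q p) * pent a i j)))"
  then have ij: "i < 2" "j < 2" by auto
  show "phase_point1 (q,p) $$ (i,j) = mat 2 2 (\<lambda>(i,j). (1/2) * (\<Sum>a<4. complex_of_real (sg a q p) * pent a i j)) $$ (i,j)"
    using ij unfolding phase_point1_def pauli_eq
    by (simp add: sum4 sg_def sb_def sgnb_def)
qed (simp_all add: phase_point1_def pauli_eq)

lemma pp_eq: "phase_point [(q1,p1),(q2,p2)] = mat 4 4 (\<lambda>(k,i). (1/4) * (\<Sum>a<4. \<Sum>b<4. complex_of_real (sg a q1 p1 * sg b q2 p2) * Tf a b (k,i)))"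
proof -
  have "phase_point [(q1,p1),(q2,p2)] = kron (phase_point1 (q1,p1)) (phase_point1 (q2,p2))"
    unfolding phase_point_def by (simp add: kron_one')
  also have "\<dots> = mat 4 4 (\<lambda>(k,i). (1/4) * (\<Sum>a<4. \<Sum>b<4. complex_of_real (sg a q1 p1 * sg b q2 p2) * Tf a b (k,i)))"
    unfolding pp1_eq kron_mat2
  proof (rule arg_cong[where f="mat 4 4"], rule ext, clarify)
    fix k i :: nat
    have "(\<Sum>a<4. complex_of_real (sg a q1 p1) * pent a (k div 2) (i div 2)) *
          (\<Sum>b<4. complex_of_real (sg b q2 p2) * pent b (k mod 2) (i mod 2)) =
          (\<Sum>a<4. \<Sum>b<4. (complex_of_real (sg a q1 p1) * pent a (k div 2) (i div 2)) *
          (complex_of_real (sg b q2 p2) * pent b (k mod 2) (i mod 2)))"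
      by (rule sum_product)
    also have "\<dots> = (\<Sum>a<4. \<Sum>b<4. complex_of_real (sg a q1 p1 * sg b q2 p2) * Tf a b (k,i))"
      by (simp add: Tf_def mult_ac)
    finally show "1 / 2 * (\<Sum>a<4. complex_of_real (sg a q1 p1) * pent a (k div 2) (i div 2)) *
         (1 / 2 * (\<Sum>a<4. complex_of_real (sg a q2 p2) * pent a (k mod 2) (i mod 2))) =
         1 / 4 * (\<Sum>a<4. \<Sum>b<4. complex_of_real (sg a q1 p1 * sg b q2 p2) * Tf a b (k, i))"
      by simp
  qed
  finally show ?thesis .
qed

lemma mtrace_mult: assumes "M \<in> carrier_mat 4 4"
  shows "mtrace (M * mat 4 4 G) = (\<Sum>i<4. \<Sum>k<4. M $$ (i,k) * G (k,i))"
proof -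
  have d: "dim_row M = 4" "dim_col M = 4" using assms by auto
  show ?thesis unfolding mtrace_def using d
    by (intro sum.cong) (auto simp: scalar_prod_def lessThan_atLeast0)
qed

lemma wig_expand: assumes M: "M \<in> carrier_mat 4 4"
  shows "wigner 2 M [(q1,p1),(q2,p2)] = (1/16) * (\<Sum>a<4. \<Sum>b<4. sg a q1 p1 * sg b q2 p2 * Ef (T a b) M)"
proof -
  let ?c = "\<lambda>a b. complex_of_real (sg a q1 p1 * sg b q2 p2)"
  have "mtrace (M * phase_point [(q1,p1),(q2,p2)]) =
     (\<Sum>i<4. \<Sum>k<4. M $$ (i,k) * ((1/4) * (\<Sum>a<4. \<Sum>b<4. ?c a b * Tf a b (k,i))))"
    unfolding pp_eq mtrace_mult[OF M] by simp
  also have "\<dots> = (\<Sum>i<4. \<Sum>k<4. \<Sum>a<4. \<Sum>b<4. (1/4) * ?c a b * (M $$ (i,k) * Tf a b (k,i)))"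
    by (simp add: sum_distrib_left mult_ac)
  also have "\<dots> = (\<Sum>a<4. \<Sum>b<4. \<Sum>i<4. \<Sum>k<4. (1/4) * ?c a b * (M $$ (i,k) * Tf a b (k,i)))"
    by (rule sum_swap4)
  also have "\<dots> = (\<Sum>a<4. \<Sum>b<4. (1/4) * ?c a b * (\<Sum>i<4. \<Sum>k<4. M $$ (i,k) * T a b $$ (k,i)))"
    by (simp add: sum_distrib_left T_Tf)
  finally have e: "mtrace (M * phase_point [(q1,p1),(q2,p2)]) = \<dots>" .
  have "Re (mtrace (M * phase_point [(q1,p1),(q2,p2)])) = (\<Sum>a<4. \<Sum>b<4. (1/4) * (sg a q1 p1 * sg b q2 p2) * Ef (T a b) M)"
    unfolding e Ef_def by (simp add: Re_sum)
  then show ?thesis unfolding wigner_def by (simp add: sum_distrib_left mult_ac)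
qed

definition gR :: "real \<Rightarrow> bool \<Rightarrow> bool \<Rightarrow> bool \<Rightarrow> bool \<Rightarrow> real" where
  "gR \<delta> q1 p1 q2 p2 = (sg 1 q1 p1 * sg 1 q2 p2 - sg 2 q1 p1 * sg 2 q2 p2 + \<delta> * (sg 3 q1 p1 + sg 3 q2 p2)) / 2"

lemma coefRy: "(\<Sum>q1\<in>UNIV. \<Sum>p1\<in>UNIV. \<Sum>q2\<in>UNIV. \<Sum>p2\<in>UNIV. gR \<delta> q1 p1 q2 p2 * ((1/16) * (\<Sum>a<4. \<Sum>b<4. sg a q1 p1 * sg b q2 p2 * E a b)))
   = (E 1 1 - E 2 2 + \<delta> * (E 3 0 + E 0 3)) / 2"
  by (simp add: UNIV_bool sum4 gR_def sg_def sb_def) (simp add: field_simps)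

lemma stab_gens:
  fixes A B :: "complex mat" and \<psi> :: "complex vec"
  assumes pg: "1\<^sub>m 4 \<in> pauli_group 2" "A \<in> pauli_group 2" "B \<in> pauli_group 2" "A * B \<in> pauli_group 2"
  and sq: "A * A = 1\<^sub>m 4" "B * B = 1\<^sub>m 4" and cm: "A * B = B * A"
  and ne: "A \<noteq> 1\<^sub>m 4" "B \<noteq> 1\<^sub>m 4" "A \<noteq> B"
  and nm: "A \<noteq> - 1\<^sub>m 4" "B \<noteq> - 1\<^sub>m 4" "A * B \<noteq> - 1\<^sub>m 4"
  and psi: "unit_vec_c 4 \<psi>" "A *\<^sub>v \<psi> = \<psi>" "B *\<^sub>v \<psi> = \<psi>"
  and uniq: "\<And>v. v \<in> carrier_vec 4 \<Longrightarrow> A *\<^sub>v v = v \<Longrightarrow> B *\<^sub>v v = v \<Longrightarrow> \<exists>c. v = c \<cdot>\<^sub>v \<psi>"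
  shows "outer \<psi> \<in> Stab 2"
proof -
  have AC: "A \<in> carrier_mat 4 4" "B \<in> carrier_mat 4 4" using pg pg_carrier by blast+
  have pC: "\<psi> \<in> carrier_vec 4" using psi(1) unfolding unit_vec_c_def by blast
  let ?I = "1\<^sub>m 4 :: complex mat"
  define S where "S = {?I, A, B, A * B}"
  have dA: "dim_row A = 4" "dim_col A = 4" "dim_row B = 4" "dim_col B = 4" using AC by auto
  have ABC: "A * B \<in> carrier_mat 4 4" using AC by (metis mult_carrier_mat)
  have dAB: "dim_row (A * B) = 4" "dim_col (A * B) = 4" using ABC by auto
  have a1: "A * (A * B) = B" using assoc_mult_mat[OF AC(1) AC(1) AC(2)] sq(1) dA by simp
  have a2: "(A * B) * B = A" using assoc_mult_mat[OF AC(1) AC(2) AC(2)] sq(2) dA by simp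
  have a3: "B * (A * B) = A" using assoc_mult_mat[OF AC(2) AC(1) AC(2)] a2 cm by simp
  have a4: "(A * B) * A = B"
  proof -
    have "(A * B) * A = (B * A) * A" using cm by simp
    also have "\<dots> = B * (A * A)" using assoc_mult_mat[OF AC(2) AC(1) AC(1)] .
    also have "\<dots> = B" using sq(1) dA by simp
    finally show ?thesis .
  qed
  have a5: "(A * B) * (A * B) = ?I" using assoc_mult_mat[OF AC(1) AC(2) ABC] a3 sq(1) by simp
  have n1: "A * B \<noteq> ?I" proof assume "A * B = ?I" then have "A * (A * B) = A" using dA by simp
    then show False using a1 ne(3) by simp qed
  have n2: "A * B \<noteq> A" proof assume "A * B = A" then have "(A * B) * B = A * B" by simp
    then show False using a2 \<open>A * B = A\<close> ne(2) a1 sq(1) by simp qed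
  have n3: "A * B \<noteq> B" proof assume "A * B = B" then have "(A * B) * B = B * B" by simp
    then show False using a2 sq(2) ne(1) by simp qed
  have cardS: "card S = 4" unfolding S_def using ne n1 n2 n3 by (simp add: eq_commute)
  have closed: "\<forall>P\<in>S. \<forall>Q\<in>S. P * Q \<in> S"
    unfolding S_def using sq cm a1 a2 a3 a4 a5 dA dAB by auto
  have comm: "\<forall>P\<in>S. \<forall>Q\<in>S. P * Q = Q * P"
    unfolding S_def using sq cm a1 a2 a3 a4 a5 dA dAB by auto
  have sub: "S \<subseteq> pauli_group 2" unfolding S_def using pg by auto
  have mI: "- ?I \<notin> S"
  proof -
    have "- ?I \<noteq> ?I"
    proof
      assume "- ?I = ?I" then have "(- ?I) $$ (0,0) = ?I $$ (0,0)" by simp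
      then show False by simp
    qed
    then show ?thesis unfolding S_def using nm by auto
  qed
  have fx: "\<forall>P\<in>S. P *\<^sub>v \<psi> = \<psi>"
    unfolding S_def using psi(2,3) pC assoc_mult_mat_vec[OF AC(1) AC(2) pC] by auto
  have un: "\<forall>v\<in>carrier_vec 4. (\<forall>P\<in>S. P *\<^sub>v v = v) \<longrightarrow> (\<exists>c. v = c \<cdot>\<^sub>v \<psi>)"
  proof (intro ballI impI)
    fix v :: "complex vec" assume v: "v \<in> carrier_vec 4" "\<forall>P\<in>S. P *\<^sub>v v = v"
    have "A \<in> S" "B \<in> S" unfolding S_def by simp_all
    then have "A *\<^sub>v v = v" "B *\<^sub>v v = v" using v(2) by blast+
    then show "\<exists>c. v = c \<cdot>\<^sub>v \<psi>" using uniq v(1) by blast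
  qed
  have IS: "?I \<in> S" unfolding S_def by simp
  have e44: "(2::nat) ^ 2 = 4" by simp
  show ?thesis unfolding Stab_def e44 mem_Collect_eq
    apply (rule exI[of _ \<psi>])
    apply (rule conjI[OF refl])
    apply (rule exI[of _ S])
    using sub IS closed comm cardS mI psi(1) fx un by blast
qed

lemma pg_mem: "k < 4 \<Longrightarrow> a < 4 \<Longrightarrow> b < 4 \<Longrightarrow> (\<i> ^ k) \<cdot>\<^sub>m T a b \<in> pauli_group 2"
  unfolding pauli_group_def
  by (rule CollectI, rule exI[of _ k], rule exI[of _ "[a,b]"]) (auto simp: T_def kron_one')

lemma pg_T: "a < 4 \<Longrightarrow> b < 4 \<Longrightarrow> T a b \<in> pauli_group 2"
  using pg_mem[of 0 a b] smult_1 by simp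

lemma pg_mT: "a < 4 \<Longrightarrow> b < 4 \<Longrightarrow> - T a b \<in> pauli_group 2"
  using pg_mem[of 2 a b] smult_m1 by simp

lemma T_idx: "i < 4 \<Longrightarrow> j < 4 \<Longrightarrow> T a b $$ (i,j) = pent a (i div 2) (j div 2) * pent b (i mod 2) (j mod 2)"
  unfolding T_eq by simp

lemma T00: "T 0 0 = 1\<^sub>m 4"
  by (rule eq_matI) (auto simp: T_idx pent_def T_eq less4)

lemma pg_I: "1\<^sub>m 4 \<in> pauli_group 2" using pg_T[of 0 0] T00 by simp

lemma mvT: "v \<in> carrier_vec 4 \<Longrightarrow> i < 4 \<Longrightarrow> (T a b *\<^sub>v v) $ i = (\<Sum>j<4. pent a (i div 2) (j div 2) * pent b (i mod 2) (j mod 2) * v $ j)"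
  using mv_index[OF T_carrier, of v i a b] by (simp add: T_idx)

lemma mvmT: "v \<in> carrier_vec 4 \<Longrightarrow> i < 4 \<Longrightarrow> (- T a b *\<^sub>v v) $ i = - (\<Sum>j<4. pent a (i div 2) (j div 2) * pent b (i mod 2) (j mod 2) * v $ j)"
proof -
  assume v: "v \<in> carrier_vec 4" and i: "i < 4"
  have "- T a b *\<^sub>v v = - (T a b *\<^sub>v v)" using v T_carrier[of a b] by (intro uminus_mult_mat_vec) auto
  then show ?thesis using mvT[OF v i] i T_carrier[of a b] by simp
qed

lemma entry_ne: "X $$ (i,j) \<noteq> Y $$ (i,j) \<Longrightarrow> X \<noteq> Y" by auto
lemma mT_idx: "i < 4 \<Longrightarrow> j < 4 \<Longrightarrow> (- T a b) $$ (i,j) = - (pent a (i div 2) (j div 2) * pent b (i mod 2) (j mod 2))"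
  using T_carrier[of a b] by (simp add: T_idx)

definition v03 :: "complex \<Rightarrow> complex \<Rightarrow> complex vec" where
  "v03 x y = vec 4 (\<lambda>i. if i = 0 then x else if i = 3 then y else 0)"

lemma v03_carrier: "v03 x y \<in> carrier_vec 4" unfolding v03_def by simp

lemma unit_v03: "(cmod x)\<^sup>2 + (cmod y)\<^sup>2 = 1 \<Longrightarrow> unit_vec_c 4 (v03 x y)"
  unfolding unit_vec_c_def v03_def by (simp add: sum4)

lemma vec4_eqI: "v \<in> carrier_vec 4 \<Longrightarrow> w \<in> carrier_vec 4 \<Longrightarrow> v $ 0 = w $ 0 \<Longrightarrow> v $ 1 = w $ 1 \<Longrightarrow> v $ 2 = w $ 2 \<Longrightarrow> v $ 3 = w $ 3 \<Longrightarrow> v = w"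
  by (rule eq_vecI) (auto simp: less4)

lemma vecT_eqI: "v \<in> carrier_vec 4 \<Longrightarrow> w \<in> carrier_vec 4 \<Longrightarrow> (T a b *\<^sub>v v) $ 0 = w $ 0 \<Longrightarrow> (T a b *\<^sub>v v) $ 1 = w $ 1
   \<Longrightarrow> (T a b *\<^sub>v v) $ 2 = w $ 2 \<Longrightarrow> (T a b *\<^sub>v v) $ 3 = w $ 3 \<Longrightarrow> T a b *\<^sub>v v = w"
  by (rule vec4_eqI) (auto intro: mult_mat_vec_carrier[OF T_carrier])

lemma vecmT_eqI: "v \<in> carrier_vec 4 \<Longrightarrow> w \<in> carrier_vec 4 \<Longrightarrow> (- T a b *\<^sub>v v) $ 0 = w $ 0 \<Longrightarrow> (- T a b *\<^sub>v v) $ 1 = w $ 1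
   \<Longrightarrow> (- T a b *\<^sub>v v) $ 2 = w $ 2 \<Longrightarrow> (- T a b *\<^sub>v v) $ 3 = w $ 3 \<Longrightarrow> - T a b *\<^sub>v v = w"
  by (rule vec4_eqI) (auto intro: mult_mat_vec_carrier[OF uminus_carrier_mat[OF T_carrier]])

lemma stab00: "outer (v03 1 0) \<in> Stab 2"
proof (rule stab_gens[of "T 3 0" "T 0 3"])
  show "1\<^sub>m 4 \<in> pauli_group 2" by (rule pg_I)
  show "T 3 0 \<in> pauli_group 2" "T 0 3 \<in> pauli_group 2" by (simp_all add: pg_T)
  have AB: "T 3 0 * T 0 3 = T 3 3"
    by (rule eq_matI) (auto simp: T_idx T_eq less4 sum4 pent_def scalar_prod_def lessThan_atLeast0[symmetric])
  then show "T 3 0 * T 0 3 \<in> pauli_group 2" by (simp add: pg_T)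
  show "T 3 0 * T 3 0 = 1\<^sub>m 4" "T 0 3 * T 0 3 = 1\<^sub>m 4" by (simp_all add: T_sq)
  show "T 3 0 * T 0 3 = T 0 3 * T 3 0" using T_comm[of 3 0 0 3] by (simp add: cs_def smult_1)
  have mI: "- 1\<^sub>m 4 = - T 0 0" using T00 by simp
  show "T 3 0 \<noteq> 1\<^sub>m 4" unfolding T00[symmetric] by (rule entry_ne[of _ 2 2]) (simp add: T_idx pent_def)
  show "T 0 3 \<noteq> 1\<^sub>m 4" unfolding T00[symmetric] by (rule entry_ne[of _ 1 1]) (simp add: T_idx pent_def)
  show "T 3 0 \<noteq> T 0 3" by (rule entry_ne[of _ 1 1]) (simp add: T_idx pent_def)
  show "T 3 0 \<noteq> - 1\<^sub>m 4" unfolding mI by (rule entry_ne[of _ 0 0]) (simp add: T_idx mT_idx pent_def)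
  show "T 0 3 \<noteq> - 1\<^sub>m 4" unfolding mI by (rule entry_ne[of _ 0 0]) (simp add: T_idx mT_idx pent_def)
  show "T 3 0 * T 0 3 \<noteq> - 1\<^sub>m 4" unfolding mI AB by (rule entry_ne[of _ 0 0]) (simp add: T_idx mT_idx pent_def)
  show "unit_vec_c 4 (v03 1 0)" by (rule unit_v03) simp
  show "T 3 0 *\<^sub>v v03 1 0 = v03 1 0" "T 0 3 *\<^sub>v v03 1 0 = v03 1 0"
    by (rule vecT_eqI[OF v03_carrier v03_carrier]; simp add: mvT[OF v03_carrier] sum4; simp add: pent_def v03_def)+
  fix v :: "complex vec" assume v: "v \<in> carrier_vec 4" "T 3 0 *\<^sub>v v = v" "T 0 3 *\<^sub>v v = v"
  have "(T 3 0 *\<^sub>v v) $ 2 = v $ 2" "(T 3 0 *\<^sub>v v) $ 3 = v $ 3" "(T 0 3 *\<^sub>v v) $ 1 = v $ 1" using v by simp_all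
  then have "v $ 1 = 0" "v $ 2 = 0" "v $ 3 = 0" using v(1) by (simp_all add: mvT sum4 pent_def)
  then have "v = (v $ 0) \<cdot>\<^sub>v v03 1 0"
    by (intro vec4_eqI) (simp_all add: v(1) v03_carrier, simp_all add: v03_def)
  then show "\<exists>c. v = c \<cdot>\<^sub>v v03 1 0" by blast
qed

lemma T30_03: "T 3 0 * T 0 3 = T 3 3"
  by (rule eq_matI) (auto simp: T_idx T_eq less4 sum4 pent_def scalar_prod_def lessThan_atLeast0[symmetric])

lemma mI_T: "- 1\<^sub>m 4 = - T 0 0" using T00 by simp

lemma mm_T: "(- T a b) * (- T c d) = T a b * T c d"
  using T_carrier[of a b] T_carrier[of c d] by simp

lemma stab11: "outer (v03 0 1) \<in> Stab 2"
proof (rule stab_gens[of "- T 3 0" "- T 0 3"])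
  show "1\<^sub>m 4 \<in> pauli_group 2" by (rule pg_I)
  show "- T 3 0 \<in> pauli_group 2" "- T 0 3 \<in> pauli_group 2" by (simp_all add: pg_mT)
  have AB: "- T 3 0 * - T 0 3 = T 3 3" unfolding mm_T by (rule T30_03)
  then show "- T 3 0 * - T 0 3 \<in> pauli_group 2" by (simp add: pg_T)
  show "- T 3 0 * - T 3 0 = 1\<^sub>m 4" "- T 0 3 * - T 0 3 = 1\<^sub>m 4" unfolding mm_T by (simp_all add: T_sq)
  show "- T 3 0 * - T 0 3 = - T 0 3 * - T 3 0" unfolding mm_T using T_comm[of 3 0 0 3] by (simp add: cs_def smult_1)
  show "- T 3 0 \<noteq> 1\<^sub>m 4" unfolding T00[symmetric] by (rule entry_ne[of _ 0 0]) (simp add: T_idx mT_idx pent_def)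
  show "- T 0 3 \<noteq> 1\<^sub>m 4" unfolding T00[symmetric] by (rule entry_ne[of _ 0 0]) (simp add: T_idx mT_idx pent_def)
  show "- T 3 0 \<noteq> - T 0 3" by (rule entry_ne[of _ 1 1]) (simp add: mT_idx pent_def)
  show "- T 3 0 \<noteq> - 1\<^sub>m 4" unfolding mI_T by (rule entry_ne[of _ 2 2]) (simp add: mT_idx pent_def)
  show "- T 0 3 \<noteq> - 1\<^sub>m 4" unfolding mI_T by (rule entry_ne[of _ 1 1]) (simp add: mT_idx pent_def)
  show "- T 3 0 * - T 0 3 \<noteq> - 1\<^sub>m 4" unfolding mI_T AB by (rule entry_ne[of _ 0 0]) (simp add: T_idx mT_idx pent_def)
  show "unit_vec_c 4 (v03 0 1)" by (rule unit_v03) simp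
  show "- T 3 0 *\<^sub>v v03 0 1 = v03 0 1" "- T 0 3 *\<^sub>v v03 0 1 = v03 0 1"
    by (rule vecmT_eqI[OF v03_carrier v03_carrier]; simp add: mvmT[OF v03_carrier] sum4; simp add: pent_def v03_def)+
  fix v :: "complex vec" assume v: "v \<in> carrier_vec 4" "- T 3 0 *\<^sub>v v = v" "- T 0 3 *\<^sub>v v = v"
  have "(- T 3 0 *\<^sub>v v) $ 0 = v $ 0" "(- T 3 0 *\<^sub>v v) $ 1 = v $ 1" "(- T 0 3 *\<^sub>v v) $ 2 = v $ 2" using v by simp_all
  then have "v $ 0 = 0" "v $ 1 = 0" "v $ 2 = 0" using v(1) by (simp_all add: mvmT sum4 pent_def)
  then have "v = (v $ 3) \<cdot>\<^sub>v v03 0 1"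
    by (intro vec4_eqI) (simp_all add: v(1) v03_carrier, simp_all add: v03_def)
  then show "\<exists>c. v = c \<cdot>\<^sub>v v03 0 1" by blast
qed

lemma negself: "- (z::complex) = z \<Longrightarrow> z = 0"
  by (simp add: complex_eq_iff)

definition rr :: complex where "rr = complex_of_real (1 / sqrt 2)"

lemma rr_sq: "rr * rr = 1/2"
  unfolding rr_def by (simp flip: of_real_mult)
lemma cmod_rr: "(cmod rr)\<^sup>2 = 1/2"
  unfolding rr_def by (simp add: norm_divide power_divide)
lemma rr_nz: "rr \<noteq> 0" unfolding rr_def by simp
lemma cnj_rr: "cnj rr = rr" unfolding rr_def by simp

lemma p12: "pauli 1 * pauli 2 = \<i> \<cdot>\<^sub>m pauli 3"
  unfolding pauli_eq mat_mult_explicit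
  by (rule eq_matI) (auto simp: less2 sum2 pent_def)
lemma p21: "pauli 2 * pauli 1 = (- \<i>) \<cdot>\<^sub>m pauli 3"
  unfolding pauli_eq mat_mult_explicit
  by (rule eq_matI) (auto simp: less2 sum2 pent_def)

lemma T11_22: "T 1 1 * T 2 2 = - T 3 3"
  unfolding T_mult p12 kron_smult using smult_m1[of "T 3 3"] by (simp add: T_def)

lemma stabP: "outer (v03 rr rr) \<in> Stab 2"
proof (rule stab_gens[of "T 1 1" "- T 2 2"])
  show "1\<^sub>m 4 \<in> pauli_group 2" by (rule pg_I)
  show "T 1 1 \<in> pauli_group 2" "- T 2 2 \<in> pauli_group 2" by (simp_all add: pg_T pg_mT)
  have AB: "T 1 1 * - T 2 2 = T 3 3" using T11_22 T_carrier[of 1 1] T_carrier[of 2 2] by simp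
  then show "T 1 1 * - T 2 2 \<in> pauli_group 2" by (simp add: pg_T)
  show "T 1 1 * T 1 1 = 1\<^sub>m 4" "- T 2 2 * - T 2 2 = 1\<^sub>m 4" unfolding mm_T by (simp_all add: T_sq)
  have "T 1 1 * T 2 2 = T 2 2 * T 1 1" using T_comm[of 1 1 2 2] by (simp add: cs_def smult_1)
  then show "T 1 1 * - T 2 2 = - T 2 2 * T 1 1" using T_carrier[of 1 1] T_carrier[of 2 2] by simp
  show "T 1 1 \<noteq> 1\<^sub>m 4" unfolding T00[symmetric] by (rule entry_ne[of _ 0 0]) (simp add: T_idx pent_def)
  show "- T 2 2 \<noteq> 1\<^sub>m 4" unfolding T00[symmetric] by (rule entry_ne[of _ 0 0]) (simp add: T_idx mT_idx pent_def)
  show "T 1 1 \<noteq> - T 2 2" by (rule entry_ne[of _ 1 2]) (simp add: T_idx mT_idx pent_def)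
  show "T 1 1 \<noteq> - 1\<^sub>m 4" unfolding mI_T by (rule entry_ne[of _ 0 0]) (simp add: T_idx mT_idx pent_def)
  show "- T 2 2 \<noteq> - 1\<^sub>m 4" unfolding mI_T by (rule entry_ne[of _ 0 0]) (simp add: mT_idx pent_def)
  show "T 1 1 * - T 2 2 \<noteq> - 1\<^sub>m 4" unfolding mI_T AB by (rule entry_ne[of _ 0 0]) (simp add: T_idx mT_idx pent_def)
  show "unit_vec_c 4 (v03 rr rr)" by (rule unit_v03) (simp add: cmod_rr)
  show "T 1 1 *\<^sub>v v03 rr rr = v03 rr rr"
    by (rule vecT_eqI[OF v03_carrier v03_carrier]; simp add: mvT[OF v03_carrier] sum4; simp add: pent_def v03_def)
  show "- T 2 2 *\<^sub>v v03 rr rr = v03 rr rr"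
    by (rule vecmT_eqI[OF v03_carrier v03_carrier]; simp add: mvmT[OF v03_carrier] sum4; simp add: pent_def v03_def)
  fix v :: "complex vec" assume v: "v \<in> carrier_vec 4" "T 1 1 *\<^sub>v v = v" "- T 2 2 *\<^sub>v v = v"
  have "(T 1 1 *\<^sub>v v) $ 0 = v $ 0" "(T 1 1 *\<^sub>v v) $ 1 = v $ 1" "(- T 2 2 *\<^sub>v v) $ 1 = v $ 1" using v by simp_all
  then have "v $ 3 = v $ 0" "v $ 2 = v $ 1" "- v $ 2 = v $ 1" using v(1) by (simp_all add: mvT mvmT sum4 pent_def)
  then have h: "- v $ 1 = v $ 1" "v $ 2 = v $ 1" "v $ 3 = v $ 0" by simp_all
  then have e: "v $ 1 = 0" "v $ 2 = 0" "v $ 3 = v $ 0" using negself[OF h(1)] h by (simp_all add: One_nat_def)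
  have "v = (v $ 0 / rr) \<cdot>\<^sub>v v03 rr rr"
    by (intro vec4_eqI) (simp_all add: v(1) v03_carrier, simp_all add: v03_def e[unfolded One_nat_def] rr_nz)
  then show "\<exists>c. v = c \<cdot>\<^sub>v v03 rr rr" by blast
qed

lemma T12_21: "T 1 2 * T 2 1 = T 3 3"
  unfolding T_mult p12 p21 kron_smult using smult_1[of "T 3 3"] by (simp add: T_def)

lemma stabQ: "outer (v03 rr (- \<i> * rr)) \<in> Stab 2"
proof (rule stab_gens[of "- T 1 2" "- T 2 1"])
  show "1\<^sub>m 4 \<in> pauli_group 2" by (rule pg_I)
  show "- T 1 2 \<in> pauli_group 2" "- T 2 1 \<in> pauli_group 2" by (simp_all add: pg_mT)
  have AB: "- T 1 2 * - T 2 1 = T 3 3" unfolding mm_T by (rule T12_21)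
  then show "- T 1 2 * - T 2 1 \<in> pauli_group 2" by (simp add: pg_T)
  show "- T 1 2 * - T 1 2 = 1\<^sub>m 4" "- T 2 1 * - T 2 1 = 1\<^sub>m 4" unfolding mm_T by (simp_all add: T_sq)
  show "- T 1 2 * - T 2 1 = - T 2 1 * - T 1 2" unfolding mm_T using T_comm[of 1 2 2 1] by (simp add: cs_def smult_1)
  show "- T 1 2 \<noteq> 1\<^sub>m 4" unfolding T00[symmetric] by (rule entry_ne[of _ 0 0]) (simp add: T_idx mT_idx pent_def)
  show "- T 2 1 \<noteq> 1\<^sub>m 4" unfolding T00[symmetric] by (rule entry_ne[of _ 0 0]) (simp add: T_idx mT_idx pent_def)
  show "- T 1 2 \<noteq> - T 2 1" by (rule entry_ne[of _ 1 2]) (simp add: mT_idx pent_def)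
  show "- T 1 2 \<noteq> - 1\<^sub>m 4" unfolding mI_T by (rule entry_ne[of _ 0 0]) (simp add: mT_idx pent_def)
  show "- T 2 1 \<noteq> - 1\<^sub>m 4" unfolding mI_T by (rule entry_ne[of _ 0 0]) (simp add: mT_idx pent_def)
  show "- T 1 2 * - T 2 1 \<noteq> - 1\<^sub>m 4" unfolding mI_T AB by (rule entry_ne[of _ 0 0]) (simp add: T_idx mT_idx pent_def)
  show "unit_vec_c 4 (v03 rr (- \<i> * rr))" by (rule unit_v03) (simp add: cmod_rr norm_mult)
  show "- T 1 2 *\<^sub>v v03 rr (- \<i> * rr) = v03 rr (- \<i> * rr)" "- T 2 1 *\<^sub>v v03 rr (- \<i> * rr) = v03 rr (- \<i> * rr)"
    by (rule vecmT_eqI[OF v03_carrier v03_carrier]; simp add: mvmT[OF v03_carrier] sum4; simp add: pent_def v03_def)+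
  fix v :: "complex vec" assume v: "v \<in> carrier_vec 4" "- T 1 2 *\<^sub>v v = v" "- T 2 1 *\<^sub>v v = v"
  have "(- T 1 2 *\<^sub>v v) $ 3 = v $ 3" "(- T 1 2 *\<^sub>v v) $ 2 = v $ 2" "(- T 2 1 *\<^sub>v v) $ 2 = v $ 2" using v by simp_all
  then have "- (\<i> * v $ 0) = v $ 3" "\<i> * v $ 1 = v $ 2" "- (\<i> * v $ 1) = v $ 2" using v(1) by (simp_all add: mvmT sum4 pent_def)
  then have "- (\<i> * v $ 1) = \<i> * v $ 1" "v $ 3 = - \<i> * v $ 0" by simp_all
  then have e: "v $ 1 = 0" "v $ 2 = 0" "v $ 3 = - \<i> * v $ 0" using negself[of "\<i> * v $ 1"] \<open>\<i> * v $ 1 = v $ 2\<close> by auto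
  have "v = (v $ 0 / rr) \<cdot>\<^sub>v v03 rr (- \<i> * rr)"
    by (intro vec4_eqI) (simp_all add: v(1) v03_carrier, simp_all add: v03_def e[unfolded One_nat_def] rr_nz)
  then show "\<exists>c. v = c \<cdot>\<^sub>v v03 rr (- \<i> * rr)" by blast
qed

type_synonym pt = "(bool \<times> bool) \<times> (bool \<times> bool)"

lemma sum_ps2: "(\<Sum>\<alpha>\<in>phase_space 2. h \<alpha>) = (\<Sum>z\<in>(UNIV :: pt set). h [fst z, snd z])"
proof -
  have e: "phase_space 2 = (\<lambda>z. [fst z, snd z]) ` (UNIV :: pt set)"
  proof
    show "phase_space 2 \<subseteq> (\<lambda>z. [fst z, snd z]) ` (UNIV :: pt set)"
    proof
      fix \<alpha> :: "(bool \<times> bool) list" assume "\<alpha> \<in> phase_space 2"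
      then have "length \<alpha> = 2" unfolding phase_space_def by simp
      then obtain x y where "\<alpha> = [x, y]"
        by (metis (no_types, lifting) One_nat_def Suc_1 length_0_conv length_Suc_conv)
      then show "\<alpha> \<in> (\<lambda>z. [fst z, snd z]) ` (UNIV :: pt set)" by (auto intro: image_eqI[of _ _ "(x,y)"])
    qed
  qed (auto simp: phase_space_def)
  have i: "inj_on (\<lambda>z. [fst z, snd z]) (UNIV :: pt set)"
    by (rule inj_onI) (auto simp: prod_eq_iff)
  show ?thesis unfolding e sum.reindex[OF i] by simp
qed

lemma sum_pair: "(\<Sum>z\<in>(UNIV :: ('a::finite \<times> 'b::finite) set). G z) = (\<Sum>x\<in>UNIV. \<Sum>y\<in>UNIV. G (x,y))"
  by (simp add: sum.cartesian_product)

lemma sumU: "(\<Sum>z\<in>(UNIV :: pt set). h z) = (\<Sum>q1\<in>UNIV. \<Sum>p1\<in>UNIV. \<Sum>q2\<in>UNIV. \<Sum>p2\<in>UNIV. h ((q1,p1),(q2,p2)))"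
  by (simp only: sum_pair)

lemma l1_conv: "l1_dist 2 F G = (\<Sum>z\<in>(UNIV :: pt set). \<bar>F [fst z, snd z] - G [fst z, snd z]\<bar>)"
  unfolding l1_dist_def sum_ps2 ..

lemma C_lower:
  fixes g :: "pt \<Rightarrow> real"
  assumes g: "\<And>z. \<bar>g z\<bar> \<le> 1"
    and st: "\<And>\<sigma>. \<sigma> \<in> Stab 2 \<Longrightarrow> (\<Sum>z\<in>UNIV. g z * wigner 2 \<sigma> [fst z, snd z]) \<le> m"
    and f: "f \<in> wigner_free 2"
  shows "(\<Sum>z\<in>UNIV. g z * wigner 2 \<rho> [fst z, snd z]) - m \<le> l1_dist 2 (wigner 2 \<rho>) f"
proof -
  obtain F c where F: "finite F" "F \<subseteq> Stab 2" "\<forall>\<sigma>\<in>F. c \<sigma> \<ge> (0::real)" "sum c F = 1"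
     "f = (\<lambda>\<alpha>. \<Sum>\<sigma>\<in>F. c \<sigma> * wigner 2 \<sigma> \<alpha>)"
    using f unfolding wigner_free_def by blast
  let ?W = "\<lambda>\<sigma> z. wigner 2 \<sigma> [fst z, snd z]"
  have "(\<Sum>z\<in>UNIV. g z * f [fst z, snd z]) = (\<Sum>z\<in>UNIV. \<Sum>\<sigma>\<in>F. c \<sigma> * (g z * ?W \<sigma> z))"
    unfolding F(5) by (simp add: sum_distrib_left mult_ac)
  also have "\<dots> = (\<Sum>\<sigma>\<in>F. c \<sigma> * (\<Sum>z\<in>UNIV. g z * ?W \<sigma> z))"
    by (subst sum.swap) (simp add: sum_distrib_left)
  also have "\<dots> \<le> (\<Sum>\<sigma>\<in>F. c \<sigma> * m)"
    by (rule sum_mono) (use F(2,3) st in \<open>auto intro!: mult_left_mono\<close>)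
  also have "\<dots> = m" using F(4) by (simp add: sum_distrib_right[symmetric])
  finally have fm: "(\<Sum>z\<in>UNIV. g z * f [fst z, snd z]) \<le> m" .
  have "(\<Sum>z\<in>UNIV. g z * ?W \<rho> z) - (\<Sum>z\<in>UNIV. g z * f [fst z, snd z])
      = (\<Sum>z\<in>UNIV. g z * (?W \<rho> z - f [fst z, snd z]))"
    by (simp add: sum_subtractf right_diff_distrib)
  also have "\<dots> \<le> (\<Sum>z\<in>(UNIV :: pt set). \<bar>?W \<rho> z - f [fst z, snd z]\<bar>)"
  proof (rule sum_mono)
    fix z :: pt
    have "g z * (?W \<rho> z - f [fst z, snd z]) \<le> \<bar>g z\<bar> * \<bar>?W \<rho> z - f [fst z, snd z]\<bar>"
      by (metis abs_ge_self abs_mult)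
    also have "\<dots> \<le> \<bar>?W \<rho> z - f [fst z, snd z]\<bar>" using g[of z] by (simp add: mult_left_le_one_le)
    finally show "g z * (?W \<rho> z - f [fst z, snd z]) \<le> \<bar>?W \<rho> z - f [fst z, snd z]\<bar>" .
  qed
  finally show ?thesis unfolding l1_conv using fm by linarith
qed

definition gX :: "real \<Rightarrow> bool \<Rightarrow> bool \<Rightarrow> bool \<Rightarrow> bool \<Rightarrow> real" where
  "gX \<delta> q1 p1 q2 p2 = (- sg 1 q1 p1 * sg 2 q2 p2 - sg 2 q1 p1 * sg 1 q2 p2 + \<delta> * (sg 3 q1 p1 + sg 3 q2 p2)) / 4"

lemma coefRx: "(\<Sum>q1\<in>UNIV. \<Sum>p1\<in>UNIV. \<Sum>q2\<in>UNIV. \<Sum>p2\<in>UNIV. gX \<delta> q1 p1 q2 p2 * ((1/16) * (\<Sum>a<4. \<Sum>b<4. sg a q1 p1 * sg b q2 p2 * E a b)))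
   = (- E 1 2 - E 2 1 + \<delta> * (E 3 0 + E 0 3)) / 4"
  by (simp add: UNIV_bool sum4 gX_def sg_def sb_def) (simp add: field_simps)

definition gRz :: "real \<Rightarrow> pt \<Rightarrow> real" where
  "gRz \<delta> z = gR \<delta> (fst (fst z)) (snd (fst z)) (fst (snd z)) (snd (snd z))"
definition gXz :: "real \<Rightarrow> pt \<Rightarrow> real" where
  "gXz \<delta> z = gX \<delta> (fst (fst z)) (snd (fst z)) (fst (snd z)) (snd (snd z))"

lemma wsumR: assumes M: "M \<in> carrier_mat 4 4"
  shows "(\<Sum>z\<in>UNIV. gRz \<delta> z * wigner 2 M [fst z, snd z]) = (Ef (T 1 1) M - Ef (T 2 2) M + \<delta> * (Ef (T 3 0) M + Ef (T 0 3) M)) / 2"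
  unfolding sumU gRz_def fst_conv snd_conv wig_expand[OF M] by (rule coefRy)

lemma wsumX: assumes M: "M \<in> carrier_mat 4 4"
  shows "(\<Sum>z\<in>UNIV. gXz \<delta> z * wigner 2 M [fst z, snd z]) = (- Ef (T 1 2) M - Ef (T 2 1) M + \<delta> * (Ef (T 3 0) M + Ef (T 0 3) M)) / 4"
  unfolding sumU gXz_def fst_conv snd_conv wig_expand[OF M] by (rule coefRx)

lemma gRz_bound: "\<delta> = 1 \<or> \<delta> = -1 \<Longrightarrow> \<bar>gRz \<delta> z\<bar> \<le> 1"
  unfolding gRz_def gR_def sg_def sb_def
  by (cases "fst (fst z)"; cases "snd (fst z)"; cases "fst (snd z)"; cases "snd (snd z)") auto

lemma gXz_bound: "\<delta> = 1 \<or> \<delta> = -1 \<Longrightarrow> \<bar>gXz \<delta> z\<bar> \<le> 1"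
  unfolding gXz_def gX_def sg_def sb_def
  by (cases "fst (fst z)"; cases "snd (fst z)"; cases "fst (snd z)"; cases "snd (snd z)") auto

lemma outer_carrier: "dim_vec \<psi> = 4 \<Longrightarrow> outer \<psi> \<in> carrier_mat 4 4"
  unfolding outer_def by simp

lemma Ef_ex: "stabctx S \<psi> \<Longrightarrow> a < 4 \<Longrightarrow> b < 4 \<Longrightarrow> Ef (T a b) (outer \<psi>) = ex (T a b) \<psi>"
  unfolding ex_def using stabctxD Ef_outer T_carrier by (metis carrier_vecD)

lemma stab_R: assumes "\<sigma> \<in> Stab 2" "\<delta> = 1 \<or> \<delta> = -1"
  shows "(\<Sum>z\<in>UNIV. gRz \<delta> z * wigner 2 \<sigma> [fst z, snd z]) \<le> 1"
proof -
  obtain \<psi> S where s: "\<sigma> = outer \<psi>" "stabctx S \<psi>" using Stab_ctx[OF assms(1)] by blast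
  have d: "dim_vec \<psi> = 4" using stabctxD(1)[OF s(2)] by auto
  have "1 * ex (T 1 1) \<psi> + (-1) * ex (T 2 2) \<psi> + \<delta> * ex (T 3 0) \<psi> + \<delta> * ex (T 0 3) \<psi> \<le> 2"
    by (rule quad_bound[OF s(2) goodP_T goodP_T goodP_T goodP_T]; (rule T_anti)?; use assms(2) in \<open>auto simp: cs_def\<close>)
  then show ?thesis unfolding wsumR[OF outer_carrier[OF d]] s(1) using Ef_ex[OF s(2)] by (simp add: algebra_simps)
qed

lemma stab_X: assumes "\<sigma> \<in> Stab 2" "\<delta> = 1 \<or> \<delta> = -1"
  shows "(\<Sum>z\<in>UNIV. gXz \<delta> z * wigner 2 \<sigma> [fst z, snd z]) \<le> 1/2"
proof -
  obtain \<psi> S where s: "\<sigma> = outer \<psi>" "stabctx S \<psi>" using Stab_ctx[OF assms(1)] by blast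
  have d: "dim_vec \<psi> = 4" using stabctxD(1)[OF s(2)] by auto
  have "(-1) * ex (T 1 2) \<psi> + (-1) * ex (T 2 1) \<psi> + \<delta> * ex (T 3 0) \<psi> + \<delta> * ex (T 0 3) \<psi> \<le> 2"
    by (rule quad_bound[OF s(2) goodP_T goodP_T goodP_T goodP_T]; (rule T_anti)?; use assms(2) in \<open>auto simp: cs_def\<close>)
  then show ?thesis unfolding wsumX[OF outer_carrier[OF d]] s(1) using Ef_ex[OF s(2)] by (simp add: algebra_simps)
qed

definition uu :: "nat \<Rightarrow> bool \<Rightarrow> bool \<Rightarrow> bool \<Rightarrow> bool \<Rightarrow> real" where
  "uu k q1 p1 q2 p2 = (if k = 0 then 1 + sg 3 q1 p1 * sg 3 q2 p2
     else if k = 3 then sg 3 q1 p1 + sg 3 q2 p2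
     else if k = 1 then sg 1 q1 p1 * sg 1 q2 p2 - sg 2 q1 p1 * sg 2 q2 p2
     else sg 1 q1 p1 * sg 2 q2 p2 + sg 2 q1 p1 * sg 1 q2 p2)"

lemma v03_dim: "dim_vec (v03 x y) = 4" unfolding v03_def by simp

lemma Ef_v03: "Ef (T a b) (outer (v03 x y)) = Re (x * cnj x * (pent a 0 0 * pent b 0 0) + x * cnj y * (pent a 1 0 * pent b 1 0)
   + y * cnj x * (pent a 0 1 * pent b 0 1) + y * cnj y * (pent a 1 1 * pent b 1 1))"
  unfolding Ef_def by (simp add: sum4 outer_def v03_def T_idx)

lemma W_v03: "wigner 2 (outer (v03 x y)) [(q1,p1),(q2,p2)] =
   ((Re (x * cnj x) + Re (y * cnj y)) * uu 0 q1 p1 q2 p2 + (Re (x * cnj x) - Re (y * cnj y)) * uu 3 q1 p1 q2 p2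
    + 2 * Re (x * cnj y) * uu 1 q1 p1 q2 p2 - 2 * Im (x * cnj y) * uu 2 q1 p1 q2 p2) / 16"
  unfolding wig_expand[OF outer_carrier[OF v03_dim]]
  by (simp add: sum4 Ef_v03 pent_def uu_def sg_def) (simp add: algebra_simps)

lemma Re_rr2: "Re rr * Re rr = 1/2" unfolding rr_def by (simp add: power_divide flip: power2_eq_square)
lemma Im_rr: "Im rr = 0" unfolding rr_def by simp

lemma W_sd: "wigner 2 (outer (v03 1 0)) [(q1,p1),(q2,p2)] = (uu 0 q1 p1 q2 p2 + uu 3 q1 p1 q2 p2) / 16"
  "wigner 2 (outer (v03 0 1)) [(q1,p1),(q2,p2)] = (uu 0 q1 p1 q2 p2 - uu 3 q1 p1 q2 p2) / 16"
  by (simp_all add: W_v03)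

lemma W_P: "wigner 2 (outer (v03 rr rr)) [(q1,p1),(q2,p2)] = (uu 0 q1 p1 q2 p2 + uu 1 q1 p1 q2 p2) / 16"
  by (simp add: W_v03 Re_rr2 Im_rr)

lemma W_Q: "wigner 2 (outer (v03 rr (- \<i> * rr))) [(q1,p1),(q2,p2)] = (uu 0 q1 p1 q2 p2 - uu 2 q1 p1 q2 p2) / 16"
  by (simp add: W_v03 Re_rr2 Im_rr)

lemma W_real: "wigner 2 (outer (v03 (complex_of_real C) (complex_of_real S))) [(q1,p1),(q2,p2)] =
   ((C*C + S*S) * uu 0 q1 p1 q2 p2 + (C*C - S*S) * uu 3 q1 p1 q2 p2 + 2 * (C*S) * uu 1 q1 p1 q2 p2) / 16"
  by (simp add: W_v03)

lemma W_imag: "wigner 2 (outer (v03 (complex_of_real C) (- \<i> * complex_of_real S))) [(q1,p1),(q2,p2)] =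
   ((C*C + S*S) * uu 0 q1 p1 q2 p2 + (C*C - S*S) * uu 3 q1 p1 q2 p2 - 2 * (C*S) * uu 2 q1 p1 q2 p2) / 16"
  by (simp add: W_v03)

lemma Ef_real: "Ef (T 1 1) (outer (v03 (complex_of_real C) (complex_of_real S))) = 2 * (C * S)"
  "Ef (T 2 2) (outer (v03 (complex_of_real C) (complex_of_real S))) = - 2 * (C * S)"
  "Ef (T 3 0) (outer (v03 (complex_of_real C) (complex_of_real S))) = C * C - S * S"
  "Ef (T 0 3) (outer (v03 (complex_of_real C) (complex_of_real S))) = C * C - S * S"
  by (simp_all add: Ef_v03 pent_def)

lemma Ef_imag: "Ef (T 1 2) (outer (v03 (complex_of_real C) (- \<i> * complex_of_real S))) = - 2 * (C * S)"
  "Ef (T 2 1) (outer (v03 (complex_of_real C) (- \<i> * complex_of_real S))) = - 2 * (C * S)"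
  "Ef (T 3 0) (outer (v03 (complex_of_real C) (- \<i> * complex_of_real S))) = C * C - S * S"
  "Ef (T 0 3) (outer (v03 (complex_of_real C) (- \<i> * complex_of_real S))) = C * C - S * S"
  by (simp_all add: Ef_v03 pent_def)

lemma wf2: assumes "\<sigma>1 \<in> Stab 2" "\<sigma>2 \<in> Stab 2" "\<sigma>1 \<noteq> \<sigma>2" "0 \<le> t" "t \<le> 1"
  shows "(\<lambda>\<alpha>. t * wigner 2 \<sigma>1 \<alpha> + (1 - t) * wigner 2 \<sigma>2 \<alpha>) \<in> wigner_free 2"
  unfolding wigner_free_def
proof (intro CollectI exI conjI)
  let ?c = "\<lambda>\<sigma>. if \<sigma> = \<sigma>1 then t else 1 - t"
  show "finite {\<sigma>1, \<sigma>2}" by simp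
  show "{\<sigma>1, \<sigma>2} \<subseteq> Stab 2" using assms by simp
  show "\<forall>\<sigma>\<in>{\<sigma>1, \<sigma>2}. 0 \<le> ?c \<sigma>" using assms by auto
  show "sum ?c {\<sigma>1, \<sigma>2} = 1" using assms by simp
  show "(\<lambda>\<alpha>. t * wigner 2 \<sigma>1 \<alpha> + (1 - t) * wigner 2 \<sigma>2 \<alpha>) = (\<lambda>\<alpha>. \<Sum>\<sigma>\<in>{\<sigma>1, \<sigma>2}. ?c \<sigma> * wigner 2 \<sigma> \<alpha>)"
    using assms by simp
qed

lemma Ef_lin: assumes "\<forall>i<4. \<forall>j<4. \<rho> $$ (i,j) = (\<Sum>\<sigma>\<in>F. complex_of_real (a \<sigma>) * \<sigma> $$ (i,j))"
  shows "Ef P \<rho> = (\<Sum>\<sigma>\<in>F. a \<sigma> * Ef P \<sigma>)"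
proof -
  have "(\<Sum>i<4. \<Sum>j<4. \<rho> $$ (i,j) * P $$ (j,i)) = (\<Sum>i<4. \<Sum>j<4. \<Sum>\<sigma>\<in>F. complex_of_real (a \<sigma>) * (\<sigma> $$ (i,j) * P $$ (j,i)))"
    using assms by (intro sum.cong refl) (simp add: sum_distrib_right sum_distrib_left mult_ac)
  also have "\<dots> = (\<Sum>i<4. \<Sum>\<sigma>\<in>F. \<Sum>j<4. complex_of_real (a \<sigma>) * (\<sigma> $$ (i,j) * P $$ (j,i)))"
    by (rule sum.cong[OF refl], rule sum.swap)
  also have "\<dots> = (\<Sum>\<sigma>\<in>F. \<Sum>i<4. \<Sum>j<4. complex_of_real (a \<sigma>) * (\<sigma> $$ (i,j) * P $$ (j,i)))"
    by (rule sum.swap)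
  also have "\<dots> = (\<Sum>\<sigma>\<in>F. complex_of_real (a \<sigma>) * (\<Sum>i<4. \<Sum>j<4. \<sigma> $$ (i,j) * P $$ (j,i)))"
    by (simp add: sum_distrib_left)
  finally show ?thesis unfolding Ef_def by (simp add: Re_sum)
qed

lemma ext_lower:
  assumes bnd: "\<And>\<sigma>. \<sigma> \<in> Stab 2 \<Longrightarrow> \<bar>L \<sigma>\<bar> \<le> 1"
    and L: "\<And>M. L M = b1 * Ef P M + b2 * Ef Q M"
    and F: "F \<subseteq> Stab 2" and dec: "\<forall>i<4. \<forall>j<4. \<rho> $$ (i,j) = (\<Sum>\<sigma>\<in>F. complex_of_real (a \<sigma>) * \<sigma> $$ (i,j))"
  shows "L \<rho> \<le> (\<Sum>\<sigma>\<in>F. \<bar>a \<sigma>\<bar>)"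
proof -
  have "L \<rho> = (\<Sum>\<sigma>\<in>F. a \<sigma> * L \<sigma>)"
    unfolding L Ef_lin[OF dec] by (simp add: sum_distrib_left sum.distrib algebra_simps)
  also have "\<dots> \<le> (\<Sum>\<sigma>\<in>F. \<bar>a \<sigma>\<bar>)"
  proof (rule sum_mono)
    fix \<sigma> assume "\<sigma> \<in> F"
    then have "\<bar>L \<sigma>\<bar> \<le> 1" using bnd F by blast
    then have "a \<sigma> * L \<sigma> \<le> \<bar>a \<sigma>\<bar> * 1"
      by (metis abs_ge_self abs_ge_zero abs_mult mult_left_mono order_trans)
    then show "a \<sigma> * L \<sigma> \<le> \<bar>a \<sigma>\<bar>" by simp
  qed
  finally show ?thesis .
qed

lemma stab_pair: assumes "\<sigma> \<in> Stab 2" "\<bar>b1\<bar> = 1" "\<bar>b2\<bar> = 1"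
  and "a1 < 4" "a2 < 4" "c1 < 4" "c2 < 4" "cs c1 a1 * cs c2 a2 = -1"
  shows "\<bar>b1 * Ef (T a1 a2) \<sigma> + b2 * Ef (T c1 c2) \<sigma>\<bar> \<le> 1"
proof -
  obtain \<psi> S where s: "\<sigma> = outer \<psi>" "stabctx S \<psi>" using Stab_ctx[OF assms(1)] by blast
  have "\<bar>b1 * ex (T a1 a2) \<psi> + b2 * ex (T c1 c2) \<psi>\<bar> \<le> 1"
    by (rule pair_bound[OF s(2) goodP_T goodP_T T_anti]) (use assms in auto)
  then show ?thesis unfolding s(1) using Ef_ex[OF s(2)] assms by simp
qed

lemma outer_v03_idx: "i < 4 \<Longrightarrow> j < 4 \<Longrightarrow> outer (v03 x y) $$ (i,j) =
  (if i = 0 then x else if i = 3 then y else 0) * cnj (if j = 0 then x else if j = 3 then y else 0)"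
  unfolding outer_def v03_def by simp

lemma outer_ne: "outer (v03 x y) $$ (0,0) \<noteq> outer (v03 x' y') $$ (0,0) \<Longrightarrow> outer (v03 x y) \<noteq> outer (v03 x' y')"
  by auto

lemma rr_cnj_sq: "rr * cnj rr = 1/2" using rr_sq cnj_rr by simp

lemma distinct_states:
  "outer (v03 1 0) \<noteq> outer (v03 0 1)" "outer (v03 1 0) \<noteq> outer (v03 rr rr)" "outer (v03 0 1) \<noteq> outer (v03 rr rr)"
  "outer (v03 1 0) \<noteq> outer (v03 rr (- \<i> * rr))" "outer (v03 0 1) \<noteq> outer (v03 rr (- \<i> * rr))"
  by (rule outer_ne; simp add: outer_v03_idx rr_cnj_sq)+

lemma sum_u1n: "(\<Sum>q1\<in>UNIV. \<Sum>p1\<in>UNIV. \<Sum>q2\<in>UNIV. \<Sum>p2\<in>UNIV. \<bar>uu 1 q1 p1 q2 p2\<bar>) = 16"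
  by (simp add: UNIV_bool uu_def sg_def sb_def)

lemma sum_u32n: "\<delta> = 1 \<or> \<delta> = -1 \<Longrightarrow> (\<Sum>q1\<in>UNIV. \<Sum>p1\<in>UNIV. \<Sum>q2\<in>UNIV. \<Sum>p2\<in>UNIV. \<bar>\<delta> * uu 3 q1 p1 q2 p2 - uu 2 q1 p1 q2 p2\<bar>) = 16"
  by (elim disjE) (simp_all add: UNIV_bool uu_def sg_def sb_def)

lemma sum_scale: "(\<Sum>q1\<in>UNIV. \<Sum>p1\<in>UNIV. \<Sum>q2\<in>UNIV. \<Sum>p2\<in>UNIV. \<bar>K * (h q1 p1 q2 p2 :: real) / d\<bar>)
   = \<bar>K / d\<bar> * (\<Sum>q1\<in>UNIV. \<Sum>p1\<in>UNIV. \<Sum>q2\<in>UNIV. \<Sum>p2\<in>UNIV. \<bar>h q1 p1 q2 p2\<bar>)"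
proof -
  have e: "\<And>x. \<bar>K * x / d\<bar> = \<bar>K / d\<bar> * \<bar>x\<bar>" by (simp add: abs_mult abs_divide)
  show ?thesis by (simp only: e sum_distrib_left)
qed

lemma sd_state: assumes "\<delta> = 1 \<or> \<delta> = -1"
  obtains x y where "outer (v03 x y) \<in> Stab 2" "outer (v03 x y) \<noteq> outer (v03 rr rr)"
    "outer (v03 x y) \<noteq> outer (v03 rr (- \<i> * rr))"
    "\<And>q1 p1 q2 p2. wigner 2 (outer (v03 x y)) [(q1,p1),(q2,p2)] = (uu 0 q1 p1 q2 p2 + \<delta> * uu 3 q1 p1 q2 p2) / 16"
  using assms
proof
  assume "\<delta> = 1" then show ?thesis using that[of 1 0] stab00 distinct_states W_sd by simp
next
  assume "\<delta> = -1" then show ?thesis using that[of 0 1] stab11 distinct_states W_sd by simp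
qed

lemma distRy:
  assumes h1: "C*C + S*S = 1" and h2: "C*C - S*S = c" and h3: "2*(C*S) = s" and h4: "c = ac * \<delta>"
    and h6: "\<delta> = 1 \<or> \<delta> = -1" and h9: "1 \<le> s + ac" and h10: "0 \<le> ac" "ac \<le> 1"
  shows "wigner_distance 2 (outer (v03 (complex_of_real C) (complex_of_real S))) = s + ac - 1"
proof -
  let ?\<rho> = "outer (v03 (complex_of_real C) (complex_of_real S))"
  have \<rho>C: "?\<rho> \<in> carrier_mat 4 4" by (rule outer_carrier[OF v03_dim])
  have lower: "s + ac - 1 \<le> l1_dist 2 (wigner 2 ?\<rho>) f" if f: "f \<in> wigner_free 2" for f
  proof -
    have "(\<Sum>z\<in>UNIV. gRz \<delta> z * wigner 2 ?\<rho> [fst z, snd z]) - 1 \<le> l1_dist 2 (wigner 2 ?\<rho>) f"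
      by (rule C_lower[OF gRz_bound[OF h6] stab_R[OF _ h6] f])
    moreover have "(\<Sum>z\<in>UNIV. gRz \<delta> z * wigner 2 ?\<rho> [fst z, snd z]) = s + ac"
      unfolding wsumR[OF \<rho>C] Ef_real h2 h3[symmetric] h4 using h6 by auto
    ultimately show ?thesis by simp
  qed
  obtain x y where sd: "outer (v03 x y) \<in> Stab 2" "outer (v03 x y) \<noteq> outer (v03 rr rr)"
    "\<And>q1 p1 q2 p2. wigner 2 (outer (v03 x y)) [(q1,p1),(q2,p2)] = (uu 0 q1 p1 q2 p2 + \<delta> * uu 3 q1 p1 q2 p2) / 16"
    using sd_state[OF h6] by metis
  define f0 where "f0 = (\<lambda>\<alpha>. ac * wigner 2 (outer (v03 x y)) \<alpha> + (1 - ac) * wigner 2 (outer (v03 rr rr)) \<alpha>)"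
  have f0: "f0 \<in> wigner_free 2" unfolding f0_def by (rule wf2[OF sd(1) stabP sd(2) h10])
  have pw: "wigner 2 ?\<rho> [(q1,p1),(q2,p2)] - f0 [(q1,p1),(q2,p2)] = (s + ac - 1) * uu 1 q1 p1 q2 p2 / 16"
    for q1 p1 q2 p2
    unfolding f0_def W_real sd(3) W_P h1 h2 h3 h4
  proof -
    have dd: "\<delta> * \<delta> = 1" using h6 by auto
    have "(1 * uu 0 q1 p1 q2 p2 + ac * \<delta> * uu 3 q1 p1 q2 p2 + s * uu 1 q1 p1 q2 p2) / 16 -
      (ac * ((uu 0 q1 p1 q2 p2 + \<delta> * uu 3 q1 p1 q2 p2) / 16) + (1 - ac) * ((uu 0 q1 p1 q2 p2 + uu 1 q1 p1 q2 p2) / 16))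
      = (s + ac - 1) * uu 1 q1 p1 q2 p2 / 16" by (simp add: field_simps)
    then show "(1 * uu 0 q1 p1 q2 p2 + ac * \<delta> * uu 3 q1 p1 q2 p2 + s * uu 1 q1 p1 q2 p2) / 16 -
      (ac * ((uu 0 q1 p1 q2 p2 + \<delta> * uu 3 q1 p1 q2 p2) / 16) + (1 - ac) * ((uu 0 q1 p1 q2 p2 + uu 1 q1 p1 q2 p2) / 16))
      = (s + ac - 1) * uu 1 q1 p1 q2 p2 / 16" .
  qed
  have val: "l1_dist 2 (wigner 2 ?\<rho>) f0 = s + ac - 1"
    unfolding l1_conv sumU fst_conv snd_conv pw sum_scale sum_u1n using h9 by simp
  show ?thesis unfolding wigner_distance_def
  proof (rule cInf_eq_minimum)
    show "s + ac - 1 \<in> {l1_dist 2 (wigner 2 ?\<rho>) f |f. f \<in> wigner_free 2}" using val f0 by force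
  next
    fix z assume "z \<in> {l1_dist 2 (wigner 2 ?\<rho>) f |f. f \<in> wigner_free 2}"
    then show "s + ac - 1 \<le> z" using lower by blast
  qed
qed

lemma distRx:
  assumes h1: "C*C + S*S = 1" and h2: "C*C - S*S = c" and h3: "2*(C*S) = s" and h4: "c = ac * \<delta>"
    and h6: "\<delta> = 1 \<or> \<delta> = -1" and h9: "1 \<le> s + ac" and h10: "0 \<le> ac" "ac \<le> 1" and h8: "s \<le> 1"
  shows "wigner_distance 2 (outer (v03 (complex_of_real C) (- \<i> * complex_of_real S))) = (s + ac - 1) / 2"
proof -
  let ?\<rho> = "outer (v03 (complex_of_real C) (- \<i> * complex_of_real S))"
  have \<rho>C: "?\<rho> \<in> carrier_mat 4 4" by (rule outer_carrier[OF v03_dim])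
  have lower: "(s + ac - 1) / 2 \<le> l1_dist 2 (wigner 2 ?\<rho>) f" if f: "f \<in> wigner_free 2" for f
  proof -
    have "(\<Sum>z\<in>UNIV. gXz \<delta> z * wigner 2 ?\<rho> [fst z, snd z]) - 1/2 \<le> l1_dist 2 (wigner 2 ?\<rho>) f"
      by (rule C_lower[OF gXz_bound[OF h6] stab_X[OF _ h6] f])
    moreover have "(\<Sum>z\<in>UNIV. gXz \<delta> z * wigner 2 ?\<rho> [fst z, snd z]) = (s + ac) / 2"
      unfolding wsumX[OF \<rho>C] Ef_imag h2 h3[symmetric] h4 using h6 by auto
    ultimately show ?thesis by simp
  qed
  obtain x y where sd: "outer (v03 x y) \<in> Stab 2" "outer (v03 x y) \<noteq> outer (v03 rr (- \<i> * rr))"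
    "\<And>q1 p1 q2 p2. wigner 2 (outer (v03 x y)) [(q1,p1),(q2,p2)] = (uu 0 q1 p1 q2 p2 + \<delta> * uu 3 q1 p1 q2 p2) / 16"
    using sd_state[OF h6] by metis
  define a where "a = (1 - s + ac) / 2"
  have a01: "0 \<le> a" "a \<le> 1" unfolding a_def using h8 h9 h10 by auto
  define f0 where "f0 = (\<lambda>\<alpha>. a * wigner 2 (outer (v03 x y)) \<alpha> + (1 - a) * wigner 2 (outer (v03 rr (- \<i> * rr))) \<alpha>)"
  have f0: "f0 \<in> wigner_free 2" unfolding f0_def by (rule wf2[OF sd(1) stabQ sd(2) a01])
  have pw: "wigner 2 ?\<rho> [(q1,p1),(q2,p2)] - f0 [(q1,p1),(q2,p2)] = (s + ac - 1) * (\<delta> * uu 3 q1 p1 q2 p2 - uu 2 q1 p1 q2 p2) / 32"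
    for q1 p1 q2 p2
    unfolding f0_def W_imag sd(3) W_Q h1 h2 h3 h4 a_def by (simp add: field_simps)
  have val: "l1_dist 2 (wigner 2 ?\<rho>) f0 = (s + ac - 1) / 2"
    unfolding l1_conv sumU fst_conv snd_conv pw sum_scale sum_u32n[OF h6] using h9 by simp
  show ?thesis unfolding wigner_distance_def
  proof (rule cInf_eq_minimum)
    show "(s + ac - 1) / 2 \<in> {l1_dist 2 (wigner 2 ?\<rho>) f |f. f \<in> wigner_free 2}" using val f0 by force
  next
    fix z assume "z \<in> {l1_dist 2 (wigner 2 ?\<rho>) f |f. f \<in> wigner_free 2}"
    then show "(s + ac - 1) / 2 \<le> z" using lower by blast
  qed
qed

lemma abs_sum3: fixes s c ac \<delta> :: real assumes "c = ac * \<delta>" "\<delta> = 1 \<or> \<delta> = -1" "1 \<le> s + ac" "0 \<le> ac" "0 < s" "s \<le> 1"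
  shows "\<bar>(1 - s + c) / 2\<bar> + \<bar>(1 - s - c) / 2\<bar> + \<bar>s\<bar> = s + ac"
  using assms by (auto simp: abs_if field_simps)

lemma extRy:
  assumes h1: "C*C + S*S = 1" and h2: "C*C - S*S = c" and h3: "2*(C*S) = s" and h4: "c = ac * \<delta>"
    and h6: "\<delta> = 1 \<or> \<delta> = -1" and h9: "1 \<le> s + ac" and h10: "0 \<le> ac" "ac \<le> 1" and h8: "s \<le> 1" "0 < s"
  shows "stab_extent 2 (outer (v03 (complex_of_real C) (complex_of_real S))) = s + ac"
proof -
  let ?\<rho> = "outer (v03 (complex_of_real C) (complex_of_real S))"
  have \<rho>C: "?\<rho> \<in> carrier_mat 4 4" by (rule outer_carrier[OF v03_dim])
  let ?X = "{\<Sum>\<sigma>\<in>F. \<bar>a \<sigma>\<bar> | F a. finite F \<and> F \<subseteq> Stab 2 \<and> ?\<rho> \<in> carrier_mat (2^2) (2^2)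
      \<and> (\<forall>i<2^2. \<forall>j<2^2. ?\<rho> $$ (i,j) = (\<Sum>\<sigma>\<in>F. complex_of_real (a \<sigma>) * \<sigma> $$ (i,j)))}"
  let ?L = "\<lambda>M. 1 * Ef (T 1 1) M + \<delta> * Ef (T 3 0) M"
  have Lrho: "?L ?\<rho> = s + ac" unfolding Ef_real h2 h3[symmetric] h4 using h6 by auto
  have lower: "s + ac \<le> z" if "z \<in> ?X" for z
  proof -
    obtain F a where Fa: "z = (\<Sum>\<sigma>\<in>F. \<bar>a \<sigma>\<bar>)" "F \<subseteq> Stab 2"
      "\<forall>i<4. \<forall>j<4. ?\<rho> $$ (i,j) = (\<Sum>\<sigma>\<in>F. complex_of_real (a \<sigma>) * \<sigma> $$ (i,j))"
      using \<open>z \<in> ?X\<close> by auto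
    have "?L ?\<rho> \<le> (\<Sum>\<sigma>\<in>F. \<bar>a \<sigma>\<bar>)"
      by (rule ext_lower[OF _ refl Fa(2) Fa(3)], rule stab_pair) (use h6 in \<open>auto simp: cs_def\<close>)
    then show ?thesis using Lrho Fa(1) by simp
  qed
  let ?F = "{outer (v03 1 0), outer (v03 0 1), outer (v03 rr rr)}"
  define a where "a = (\<lambda>\<sigma>. if \<sigma> = outer (v03 1 0) then (1 - s + c) / 2 else if \<sigma> = outer (v03 0 1) then (1 - s - c) / 2 else s)"
  have hC: "C * C = (1 + c) / 2" "S * S = (1 - c) / 2" "C * S = s / 2" using h1 h2 h3 by auto
  have dec: "\<forall>i<4. \<forall>j<4. ?\<rho> $$ (i,j) = (\<Sum>\<sigma>\<in>?F. complex_of_real (a \<sigma>) * \<sigma> $$ (i,j))"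
  proof (intro allI impI)
    fix i j :: nat assume ij: "i < 4" "j < 4"
    have "(\<Sum>\<sigma>\<in>?F. complex_of_real (a \<sigma>) * \<sigma> $$ (i,j)) = complex_of_real ((1 - s + c) / 2) * outer (v03 1 0) $$ (i,j)
       + complex_of_real ((1 - s - c) / 2) * outer (v03 0 1) $$ (i,j) + complex_of_real s * outer (v03 rr rr) $$ (i,j)"
      using distinct_states by (simp add: a_def)
    then show "?\<rho> $$ (i,j) = (\<Sum>\<sigma>\<in>?F. complex_of_real (a \<sigma>) * \<sigma> $$ (i,j))"
      using ij unfolding less4
      by (auto simp: outer_v03_idx complex_eq_iff Re_rr2 Im_rr hC field_simps power2_eq_square)
  qed
  have mem: "s + ac \<in> ?X"
  proof -
    have "(\<Sum>\<sigma>\<in>?F. \<bar>a \<sigma>\<bar>) = \<bar>(1 - s + c) / 2\<bar> + \<bar>(1 - s - c) / 2\<bar> + \<bar>s\<bar>"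
      using distinct_states by (simp add: a_def)
    also have "\<dots> = s + ac" by (rule abs_sum3[OF h4 h6 h9 h10(1) h8(2) h8(1)])
    finally have "s + ac = (\<Sum>\<sigma>\<in>?F. \<bar>a \<sigma>\<bar>)" by simp
    moreover have "?F \<subseteq> Stab 2" using stab00 stab11 stabP by simp
    ultimately show ?thesis using dec \<rho>C by (auto intro!: exI[of _ ?F] exI[of _ a])
  qed
  show ?thesis unfolding stab_extent_def
    by (rule cInf_eq_minimum[OF mem]) (rule lower)
qed

lemma extRx:
  assumes h1: "C*C + S*S = 1" and h2: "C*C - S*S = c" and h3: "2*(C*S) = s" and h4: "c = ac * \<delta>"
    and h6: "\<delta> = 1 \<or> \<delta> = -1" and h9: "1 \<le> s + ac" and h10: "0 \<le> ac" "ac \<le> 1" and h8: "s \<le> 1" "0 < s"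
  shows "stab_extent 2 (outer (v03 (complex_of_real C) (- \<i> * complex_of_real S))) = s + ac"
proof -
  let ?\<rho> = "outer (v03 (complex_of_real C) (- \<i> * complex_of_real S))"
  have \<rho>C: "?\<rho> \<in> carrier_mat 4 4" by (rule outer_carrier[OF v03_dim])
  let ?X = "{\<Sum>\<sigma>\<in>F. \<bar>a \<sigma>\<bar> | F a. finite F \<and> F \<subseteq> Stab 2 \<and> ?\<rho> \<in> carrier_mat (2^2) (2^2)
      \<and> (\<forall>i<2^2. \<forall>j<2^2. ?\<rho> $$ (i,j) = (\<Sum>\<sigma>\<in>F. complex_of_real (a \<sigma>) * \<sigma> $$ (i,j)))}"
  let ?L = "\<lambda>M. (-1) * Ef (T 1 2) M + \<delta> * Ef (T 3 0) M"
  have Lrho: "?L ?\<rho> = s + ac" unfolding Ef_imag h2 h3[symmetric] h4 using h6 by auto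
  have lower: "s + ac \<le> z" if "z \<in> ?X" for z
  proof -
    obtain F a where Fa: "z = (\<Sum>\<sigma>\<in>F. \<bar>a \<sigma>\<bar>)" "F \<subseteq> Stab 2"
      "\<forall>i<4. \<forall>j<4. ?\<rho> $$ (i,j) = (\<Sum>\<sigma>\<in>F. complex_of_real (a \<sigma>) * \<sigma> $$ (i,j))"
      using \<open>z \<in> ?X\<close> by auto
    have "?L ?\<rho> \<le> (\<Sum>\<sigma>\<in>F. \<bar>a \<sigma>\<bar>)"
      by (rule ext_lower[OF _ refl Fa(2) Fa(3)], rule stab_pair) (use h6 in \<open>auto simp: cs_def\<close>)
    then show ?thesis using Lrho Fa(1) by simp
  qed
  let ?F = "{outer (v03 1 0), outer (v03 0 1), outer (v03 rr (- \<i> * rr))}"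
  define a where "a = (\<lambda>\<sigma>. if \<sigma> = outer (v03 1 0) then (1 - s + c) / 2 else if \<sigma> = outer (v03 0 1) then (1 - s - c) / 2 else s)"
  have hC: "C * C = (1 + c) / 2" "S * S = (1 - c) / 2" "C * S = s / 2" using h1 h2 h3 by auto
  have dec: "\<forall>i<4. \<forall>j<4. ?\<rho> $$ (i,j) = (\<Sum>\<sigma>\<in>?F. complex_of_real (a \<sigma>) * \<sigma> $$ (i,j))"
  proof (intro allI impI)
    fix i j :: nat assume ij: "i < 4" "j < 4"
    have "(\<Sum>\<sigma>\<in>?F. complex_of_real (a \<sigma>) * \<sigma> $$ (i,j)) = complex_of_real ((1 - s + c) / 2) * outer (v03 1 0) $$ (i,j)
       + complex_of_real ((1 - s - c) / 2) * outer (v03 0 1) $$ (i,j) + complex_of_real s * outer (v03 rr (- \<i> * rr)) $$ (i,j)"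
      using distinct_states by (simp add: a_def)
    then show "?\<rho> $$ (i,j) = (\<Sum>\<sigma>\<in>?F. complex_of_real (a \<sigma>) * \<sigma> $$ (i,j))"
      using ij unfolding less4
      by (auto simp: outer_v03_idx complex_eq_iff Re_rr2 Im_rr hC field_simps power2_eq_square)
  qed
  have mem: "s + ac \<in> ?X"
  proof -
    have "(\<Sum>\<sigma>\<in>?F. \<bar>a \<sigma>\<bar>) = \<bar>(1 - s + c) / 2\<bar> + \<bar>(1 - s - c) / 2\<bar> + \<bar>s\<bar>"
      using distinct_states by (simp add: a_def)
    also have "\<dots> = s + ac" by (rule abs_sum3[OF h4 h6 h9 h10(1) h8(2) h8(1)])
    finally have "s + ac = (\<Sum>\<sigma>\<in>?F. \<bar>a \<sigma>\<bar>)" by simp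
    moreover have "?F \<subseteq> Stab 2" using stab00 stab11 stabQ by simp
    ultimately show ?thesis using dec \<rho>C by (auto intro!: exI[of _ ?F] exI[of _ a])
  qed
  show ?thesis unfolding stab_extent_def
    by (rule cInf_eq_minimum[OF mem]) (rule lower)
qed

theorem theorem5p1:
  fixes \<theta> :: real
  assumes "0 < \<theta>" and "\<theta> < pi"
  shows "wigner_distance 2 (rho_Ry \<theta>) = \<bar>sin \<theta>\<bar> + \<bar>cos \<theta>\<bar> - 1
    \<and> wigner_distance 2 (rho_Rx \<theta>) = (\<bar>sin \<theta>\<bar> + \<bar>cos \<theta>\<bar> - 1) / 2
    \<and> stab_extent 2 (rho_Ry \<theta>) = \<bar>sin \<theta>\<bar> + \<bar>cos \<theta>\<bar>
    \<and> stab_extent 2 (rho_Rx \<theta>) = \<bar>sin \<theta>\<bar> + \<bar>cos \<theta>\<bar>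
    \<and> (wigner_distance 2 (rho_Ry \<theta>) > 0 \<longrightarrow> tightness 2 (rho_Ry \<theta>) = 1)
    \<and> (wigner_distance 2 (rho_Rx \<theta>) > 0 \<longrightarrow> tightness 2 (rho_Rx \<theta>) = 2)"
proof -
  define C where "C = cos (\<theta> / 2)"
  define S where "S = sin (\<theta> / 2)"
  define c where "c = cos \<theta>"
  define s where "s = sin \<theta>"
  define ac where "ac = \<bar>c\<bar>"
  define \<delta> :: real where "\<delta> = (if 0 \<le> c then 1 else -1)"
  have th: "\<theta> = 2 * (\<theta> / 2)" by simp
  have h1: "C*C + S*S = 1" unfolding C_def S_def by (rule sin_cos_squared_add3)
  have h2: "C*C - S*S = c" unfolding C_def S_def c_def
    by (subst (3) th, subst cos_double) (simp add: power2_eq_square)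
  have h3: "2*(C*S) = s" unfolding C_def S_def s_def
    by (subst (3) th, subst sin_double) simp
  have h4: "c = ac * \<delta>" unfolding ac_def \<delta>_def by auto
  have h6: "\<delta> = 1 \<or> \<delta> = -1" unfolding \<delta>_def by auto
  have spos: "0 < s" unfolding s_def using assms by (rule sin_gt_zero)
  have sle: "s \<le> 1" unfolding s_def by simp
  have acle: "0 \<le> ac" "ac \<le> 1" unfolding ac_def c_def by simp_all
  have sc1: "sin \<theta> * sin \<theta> + cos \<theta> * cos \<theta> = 1" using sin_cos_squared_add3[of \<theta>] by linarith
  have sq: "s * s + ac * ac = 1" unfolding ac_def s_def c_def
    using sc1 by (simp only: abs_mult_self_eq)
  have "s * s \<le> s" using spos sle by (intro mult_left_le_one_le) auto
  moreover have "ac * ac \<le> ac" using acle by (intro mult_left_le_one_le) auto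
  ultimately have h9: "1 \<le> s + ac" using sq by linarith
  have Ry: "rho_Ry \<theta> = outer (v03 (complex_of_real C) (complex_of_real S))"
    unfolding rho_Ry_def psi_Ry_def v03_def C_def S_def ..
  have Rx: "rho_Rx \<theta> = outer (v03 (complex_of_real C) (- \<i> * complex_of_real S))"
    unfolding rho_Rx_def psi_Rx_def v03_def C_def S_def ..
  have abs_s: "\<bar>sin \<theta>\<bar> = s" unfolding s_def using spos s_def by simp
  have abs_c: "\<bar>cos \<theta>\<bar> = ac" unfolding ac_def c_def ..
  have d1: "wigner_distance 2 (rho_Ry \<theta>) = s + ac - 1"
    unfolding Ry by (rule distRy[OF h1 h2 h3 h4 h6 h9 acle])
  have d2: "wigner_distance 2 (rho_Rx \<theta>) = (s + ac - 1) / 2"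
    unfolding Rx by (rule distRx[OF h1 h2 h3 h4 h6 h9 acle sle])
  have e1: "stab_extent 2 (rho_Ry \<theta>) = s + ac"
    unfolding Ry by (rule extRy[OF h1 h2 h3 h4 h6 h9 acle sle spos])
  have e2: "stab_extent 2 (rho_Rx \<theta>) = s + ac"
    unfolding Rx by (rule extRx[OF h1 h2 h3 h4 h6 h9 acle sle spos])
  have t2: "1 < s + ac \<Longrightarrow> (s + ac - 1) / ((s + ac - 1) / 2) = 2" by (simp add: field_simps)
  show ?thesis unfolding abs_s abs_c tightness_def d1 d2 e1 e2 using t2 by auto
qed

end
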